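(* Let $M$ be a disconnected matroid. Then $M$ is $(2,2)$-uniform if and only if one of the following holds: (i) $M$ or $M^*$ is paving; or (ii) $M\cong M_p\oplus U_{0,1}$ or $M\cong M_p^*\oplus U_{1,1}$ for some paving matroid $M_p$; or (iii) $M\cong M_p\oplus U_{1,2}$ for some sparse paving matroid $M_p$.
   Context: A matroid is $(2,2)$-uniform if it has no minor isomorphic to $U_{2,2}\oplus U_{0,2}$. A matroid $M$ is paving if every flat of rank $r(M)-2$ is independent (equivalently every circuit has size at least $r(M)$). A matroid is sparse paving if both it and its dual are paving. *)

theory Defs
  imports Main
begin

type_synonym 'a matroid = "'a set \<times> 'a set set"

definition ground :: "'a matroid \<Rightarrow> 'a set" where
  "ground M = fst M"

definition indep :: "'a matroid \<Rightarrow> 'a set set" where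
  "indep M = snd M"

definition matroid :: "'a matroid \<Rightarrow> bool" where
  "matroid M \<longleftrightarrow>
     finite (ground M) \<and>
     (\<forall>I\<in>indep M. I \<subseteq> ground M) \<and>
     {} \<in> indep M \<and>
     (\<forall>X Y. Y \<in> indep M \<longrightarrow> X \<subseteq> Y \<longrightarrow> X \<in> indep M) \<and>
     (\<forall>X Y. X \<in> indep M \<longrightarrow> Y \<in> indep M \<longrightarrow> card X < card Y \<longrightarrow>
        (\<exists>y\<in>Y - X. insert y X \<in> indep M))"

definition basis :: "'a matroid \<Rightarrow> 'a set \<Rightarrow> bool" where
  "basis M B \<longleftrightarrow> B \<in> indep M \<and> (\<forall>I\<in>indep M. B \<subseteq> I \<longrightarrow> I = B)"

definition circuit :: "'a matroid \<Rightarrow> 'a set \<Rightarrow> bool" where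
  "circuit M C \<longleftrightarrow> C \<subseteq> ground M \<and> C \<notin> indep M \<and> (\<forall>x\<in>C. C - {x} \<in> indep M)"

definition rk :: "'a matroid \<Rightarrow> 'a set \<Rightarrow> nat" where
  "rk M X = Max (card ` {I \<in> indep M. I \<subseteq> X})"

definition dual :: "'a matroid \<Rightarrow> 'a matroid" where
  "dual M = (ground M, {X. X \<subseteq> ground M \<and> (\<exists>B. basis M B \<and> X \<inter> B = {})})"

definition delete :: "'a matroid \<Rightarrow> 'a set \<Rightarrow> 'a matroid" where
  "delete M D = (ground M - D, {I \<in> indep M. I \<inter> D = {}})"

definition contract :: "'a matroid \<Rightarrow> 'a set \<Rightarrow> 'a matroid" where
  "contract M C = dual (delete (dual M) C)"

definition minor :: "'a matroid \<Rightarrow> 'a matroid \<Rightarrow> bool" where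
  "minor N M \<longleftrightarrow> (\<exists>C D. C \<subseteq> ground M \<and> D \<subseteq> ground M \<and> C \<inter> D = {} \<and>
                        N = delete (contract M C) D)"

definition iso :: "'a matroid \<Rightarrow> 'b matroid \<Rightarrow> bool" where
  "iso M N \<longleftrightarrow> (\<exists>f. bij_betw f (ground M) (ground N) \<and>
                  (\<forall>X. X \<subseteq> ground M \<longrightarrow> (X \<in> indep M \<longleftrightarrow> f ` X \<in> indep N)))"

definition dsum :: "'a matroid \<Rightarrow> 'b matroid \<Rightarrow> ('a + 'b) matroid" where
  "dsum M N = (Inl ` ground M \<union> Inr ` ground N,
               {Inl ` I \<union> Inr ` J | I J. I \<in> indep M \<and> J \<in> indep N})"

definition U :: "nat \<Rightarrow> nat \<Rightarrow> nat matroid" where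
  "U r n = ({0..<n}, {X. X \<subseteq> {0..<n} \<and> card X \<le> r})"

definition disconnected :: "'a matroid \<Rightarrow> bool" where
  "disconnected M \<longleftrightarrow> (\<exists>X. X \<noteq> {} \<and> X \<subset> ground M \<and>
                          rk M X + rk M (ground M - X) = rk M (ground M))"

definition paving :: "'a matroid \<Rightarrow> bool" where
  "paving M \<longleftrightarrow> (\<forall>C. circuit M C \<longrightarrow> card C \<ge> rk M (ground M))"

definition sparse_paving :: "'a matroid \<Rightarrow> bool" where
  "sparse_paving M \<longleftrightarrow> paving M \<and> paving (dual M)"

definition two_two_uniform :: "'a matroid \<Rightarrow> bool" where
  "two_two_uniform M \<longleftrightarrow> \<not> (\<exists>N. minor N M \<and> iso N (dsum (U 2 2) (U 0 2)))"

end

theory Submission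
  imports Defs
begin


lemma finite_max_card:
  assumes "finite F" "F \<noteq> {}"
  shows "\<exists>K\<in>F. \<forall>K'\<in>F. card K' \<le> card (K::'b set)"
proof -
  have "Max (card ` F) \<in> card ` F" using assms by (intro Max_in) auto
  then obtain K where "K \<in> F" "card K = Max (card ` F)" by auto
  moreover have "\<forall>K'\<in>F. card K' \<le> card K"
  proof
    fix K' assume "K' \<in> F"
    then have "card K' \<in> card ` F" by simp
    then show "card K' \<le> card K" using Max_ge[of "card ` F" "card K'"] assms \<open>card K = Max (card ` F)\<close> by simp
  qed
  ultimately show ?thesis by blast
qed

locale matr =
  fixes M :: "'a matroid"
  assumes wf: "matroid M"
begin

abbreviation "E \<equiv> ground M"
abbreviation "r \<equiv> rk M"

lemma finE: "finite E" using wf by (simp add: matroid_def)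
lemma indep_sub: "I \<in> indep M \<Longrightarrow> I \<subseteq> E" using wf by (simp add: matroid_def)
lemma indep_empty: "{} \<in> indep M" using wf by (simp add: matroid_def)
lemma indep_down: "Y \<in> indep M \<Longrightarrow> X \<subseteq> Y \<Longrightarrow> X \<in> indep M" using wf by (simp add: matroid_def)
lemma indep_aug: "X \<in> indep M \<Longrightarrow> Y \<in> indep M \<Longrightarrow> card X < card Y \<Longrightarrow> \<exists>y\<in>Y - X. insert y X \<in> indep M"
  using wf unfolding matroid_def by blast
lemma indep_fin: "I \<in> indep M \<Longrightarrow> finite I" using indep_sub finE finite_subset by blast

lemma fam_fin: "finite {I \<in> indep M. I \<subseteq> S}"
proof -
  have "{I \<in> indep M. I \<subseteq> S} \<subseteq> Pow E" using indep_sub by auto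
  moreover have "finite (Pow E)" using finE by simp
  ultimately show ?thesis by (rule finite_subset)
qed

lemma rk_ge: "I \<in> indep M \<Longrightarrow> I \<subseteq> S \<Longrightarrow> card I \<le> r S"
  unfolding rk_def using fam_fin by (intro Max_ge) auto

lemma rk_obtain: "\<exists>I\<in>indep M. I \<subseteq> S \<and> card I = r S"
proof -
  have "{I \<in> indep M. I \<subseteq> S} \<noteq> {}" using indep_empty by auto
  then have "r S \<in> card ` {I \<in> indep M. I \<subseteq> S}" unfolding rk_def using fam_fin
    by (intro Max_in) auto
  then show ?thesis by auto
qed

lemma extend: assumes "J \<in> indep M" "J \<subseteq> S"
  shows "\<exists>K\<in>indep M. J \<subseteq> K \<and> K \<subseteq> S \<and> card K = r S"
proof -
  let ?F = "{K \<in> indep M. J \<subseteq> K \<and> K \<subseteq> S}"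
  have f1: "finite ?F" using fam_fin[of S] by (rule rev_finite_subset) auto
  have f2: "?F \<noteq> {}" using assms by auto
  obtain K where K: "K \<in> ?F" "\<forall>K'\<in>?F. card K' \<le> card K"
    using finite_max_card[OF f1 f2] by blast
  obtain I where I: "I \<in> indep M" "I \<subseteq> S" "card I = r S" using rk_obtain by blast
  have "card K \<ge> r S"
  proof (rule ccontr)
    assume "\<not> ?thesis"
    then have "card K < card I" using I by simp
    then obtain y where "y \<in> I - K" "insert y K \<in> indep M" using indep_aug[of K I] K(1) I(1) by blast
    then have "insert y K \<in> ?F" using K(1) I(2) by auto
    then have "card (insert y K) \<le> card K" using K(2) by blast
    moreover have "finite K" using K(1) indep_fin by auto
    ultimately show False using \<open>y \<in> I - K\<close> by simp
  qed
  moreover have "card K \<le> r S" using K(1) rk_ge by auto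
  ultimately show ?thesis using K(1) by auto
qed

lemma maximal_card: assumes "J \<in> indep M" "J \<subseteq> S" "\<forall>x\<in>S - J. insert x J \<notin> indep M"
  shows "card J = r S"
proof -
  obtain K where K: "K \<in> indep M" "J \<subseteq> K" "K \<subseteq> S" "card K = r S" using extend assms by blast
  have "K = J"
  proof (rule ccontr)
    assume "K \<noteq> J"
    then obtain x where "x \<in> K - J" using K by auto
    then have "insert x J \<in> indep M" using K indep_down[of K "insert x J"] by auto
    then show False using assms(3) \<open>x \<in> K - J\<close> K(3) by blast
  qed
  then show ?thesis using K by simp
qed

lemma rk_mono: assumes "A \<subseteq> B" shows "r A \<le> r B"
proof -
  obtain I where "I \<in> indep M" "I \<subseteq> A" "card I = r A" using rk_obtain by blast
  then show ?thesis using rk_ge[of I B] assms by auto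
qed

lemma rk_le_card: assumes "finite S" shows "r S \<le> card S"
proof -
  obtain I where "I \<in> indep M" "I \<subseteq> S" "card I = r S" using rk_obtain by blast
  then show ?thesis using card_mono[OF assms, of I] by auto
qed

lemma rk_le_cardE: "r S \<le> card (S \<inter> E)"
proof -
  obtain I where "I \<in> indep M" "I \<subseteq> S" "card I = r S" using rk_obtain by blast
  moreover have "I \<subseteq> S \<inter> E" using \<open>I \<in> indep M\<close> \<open>I \<subseteq> S\<close> indep_sub by auto
  ultimately show ?thesis using finE by (metis card_mono finite_Int)
qed

lemma rk_inter: "r S = r (S \<inter> E)"
proof -
  obtain I where "I \<in> indep M" "I \<subseteq> S" "card I = r S" using rk_obtain by blast
  then have "r S \<le> r (S \<inter> E)" using rk_ge indep_sub by fastforce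
  then show ?thesis using rk_mono[of "S \<inter> E" S] by auto
qed

lemma indep_rk: "I \<in> indep M \<Longrightarrow> r I = card I"
  using rk_ge[of I I] rk_le_card[of I] indep_fin by fastforce

lemma rk_indep: "I \<subseteq> E \<Longrightarrow> r I = card I \<Longrightarrow> I \<in> indep M"
proof -
  assume a: "I \<subseteq> E" "r I = card I"
  obtain J where "J \<in> indep M" "J \<subseteq> I" "card J = r I" using rk_obtain by blast
  moreover have "finite I" using a finE finite_subset by blast
  ultimately have "J = I" using a card_subset_eq by metis
  then show ?thesis using \<open>J \<in> indep M\<close> by simp
qed

lemma rk_insert: "r (insert x S) \<le> r S + 1"
proof -
  obtain I where I: "I \<in> indep M" "I \<subseteq> insert x S" "card I = r (insert x S)" using rk_obtain by blast
  have "I - {x} \<in> indep M" "I - {x} \<subseteq> S" using I indep_down by auto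
  then have "card (I - {x}) \<le> r S" using rk_ge by blast
  moreover have "card I \<le> card (I - {x}) + 1" using I indep_fin
    by (cases "x \<in> I") (auto simp: card_Diff_singleton_if)
  ultimately show ?thesis using I by simp
qed

lemma rk_union_card: "finite B \<Longrightarrow> r (A \<union> B) \<le> r A + card B"
proof (induction B rule: finite_induct)
  case empty then show ?case by simp
next
  case (insert x F)
  have "r (A \<union> insert x F) = r (insert x (A \<union> F))" by simp
  also have "\<dots> \<le> r (A \<union> F) + 1" by (rule rk_insert)
  finally show ?case using insert by simp
qed

lemma rk_E_bound: "r S \<le> r E"
  using rk_inter[of S] rk_mono[of "S \<inter> E" E] by auto

lemma submod: "r (A \<union> B) + r (A \<inter> B) \<le> r A + r B"
proof -
  obtain I where I: "I \<in> indep M" "I \<subseteq> A \<inter> B" "card I = r (A \<inter> B)" using rk_obtain by blast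
  obtain J where J: "J \<in> indep M" "I \<subseteq> J" "J \<subseteq> A \<union> B" "card J = r (A \<union> B)"
    using extend[of I "A \<union> B"] I by blast
  have JAB: "J \<inter> (A \<inter> B) = I"
  proof (rule ccontr)
    assume "J \<inter> (A \<inter> B) \<noteq> I"
    then have "I \<subset> J \<inter> (A \<inter> B)" using I J by auto
    moreover have "J \<inter> (A \<inter> B) \<in> indep M" using J indep_down by auto
    moreover have "finite (J \<inter> (A \<inter> B))" using J indep_fin by auto
    ultimately have "card I < card (J \<inter> (A \<inter> B))" by (simp add: psubset_card_mono)
    moreover have "card (J \<inter> (A \<inter> B)) \<le> r (A \<inter> B)" using rk_ge[of "J \<inter> (A \<inter> B)"] \<open>J \<inter> (A \<inter> B) \<in> indep M\<close> by auto
    ultimately show False using I by simp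
  qed
  have fJ: "finite J" using J indep_fin by auto
  have u: "(J \<inter> A) \<union> (J \<inter> B) = J" using J by auto
  have i: "(J \<inter> A) \<inter> (J \<inter> B) = I" using JAB by auto
  have "card (J \<inter> A) + card (J \<inter> B) = card J + card I"
    using card_Un_Int[of "J \<inter> A" "J \<inter> B"] fJ u i by simp
  moreover have "card (J \<inter> A) \<le> r A" using J indep_down rk_ge by (meson inf_le1 inf_le2)
  moreover have "card (J \<inter> B) \<le> r B" using J indep_down rk_ge by (meson inf_le1 inf_le2)
  ultimately show ?thesis using I J by linarith
qed

lemma basis_iff: "basis M B \<longleftrightarrow> B \<in> indep M \<and> card B = r E"
proof
  assume b: "basis M B"
  then have "B \<in> indep M" by (simp add: basis_def)
  moreover have "\<forall>x\<in>E - B. insert x B \<notin> indep M" using b unfolding basis_def by blast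
  ultimately show "B \<in> indep M \<and> card B = r E" using maximal_card indep_sub by blast
next
  assume a: "B \<in> indep M \<and> card B = r E"
  show "basis M B" unfolding basis_def
  proof (intro conjI ballI impI)
    show "B \<in> indep M" using a by simp
    fix I assume "I \<in> indep M" "B \<subseteq> I"
    moreover have "card I \<le> r E" using \<open>I \<in> indep M\<close> rk_ge indep_sub by blast
    ultimately show "I = B" using a indep_fin[of I] card_seteq[of I B] by auto
  qed
qed

lemma basis_exists_sup: "I \<in> indep M \<Longrightarrow> \<exists>B. basis M B \<and> I \<subseteq> B"
  using extend[of I E] indep_sub basis_iff by blast

end



lemma minimal_ex:
  assumes "finite D0" "P D0"
  shows "\<exists>D\<subseteq>D0. P D \<and> (\<forall>x\<in>D. \<not> P (D - {x}))"
  using assms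
proof (induction "card D0" arbitrary: D0 rule: less_induct)
  case less
  show ?case
  proof (cases "\<forall>x\<in>D0. \<not> P (D0 - {x})")
    case True then show ?thesis using less.prems by blast
  next
    case False
    then obtain x where x: "x \<in> D0" "P (D0 - {x})" by blast
    have "card (D0 - {x}) < card D0" using x(1) less.prems(1) by (rule card_Diff1_less[rotated])
    then obtain D where "D \<subseteq> D0 - {x}" "P D" "\<forall>x\<in>D. \<not> P (D - {x})"
      using less.hyps[of "D0 - {x}"] less.prems x by auto
    then show ?thesis by blast
  qed
qed

context matr
begin

definition NB where "NB \<longleftrightarrow> (\<forall>S\<subseteq>E. r S + 2 \<le> r E \<longrightarrow> card S \<le> r S + 1)"
definition PAV where "PAV \<longleftrightarrow> (\<forall>S\<subseteq>E. card S < r E \<longrightarrow> r S = card S)"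
definition DPAV where "DPAV \<longleftrightarrow> (\<forall>S\<subseteq>E. card S > r E \<longrightarrow> r S = r E)"

lemma paving_iff: "paving M \<longleftrightarrow> PAV"
proof
  assume p: "paving M"
  show PAV unfolding PAV_def
  proof (intro allI impI)
    fix S assume S: "S \<subseteq> E" "card S < r E"
    show "r S = card S"
    proof (rule ccontr)
      assume "r S \<noteq> card S"
      then have "S \<notin> indep M" using indep_rk by auto
      moreover have "finite S" using S finE finite_subset by blast
      ultimately obtain D where D: "D \<subseteq> S" "D \<notin> indep M" "\<forall>x\<in>D. \<not> (D - {x} \<notin> indep M)"
        using minimal_ex[of S "\<lambda>D. D \<notin> indep M"] by blast
      then have "circuit M D" unfolding circuit_def using S by auto
      then have "card D \<ge> r E" using p unfolding paving_def by blast
      moreover have "card D \<le> card S" using D(1) \<open>finite S\<close> card_mono by blast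
      ultimately show False using S by simp
    qed
  qed
next
  assume p: PAV
  show "paving M" unfolding paving_def
  proof (intro allI impI)
    fix C assume c: "circuit M C"
    show "r E \<le> card C"
    proof (rule ccontr)
      assume "\<not> ?thesis"
      then have "r C = card C" using p c unfolding PAV_def circuit_def by auto
      then have "C \<in> indep M" using rk_indep c unfolding circuit_def by auto
      then show False using c unfolding circuit_def by auto
    qed
  qed
qed

lemma ground_dual: "ground (dual M) = E" by (simp add: dual_def ground_def)

lemma indep_dual: "indep (dual M) = {X. X \<subseteq> E \<and> r (E - X) = r E}"
proof (intro set_eqI iffI)
  fix X assume "X \<in> indep (dual M)"
  then obtain B where B: "X \<subseteq> E" "basis M B" "X \<inter> B = {}" by (auto simp: dual_def indep_def ground_def)
  then have "B \<in> indep M" "card B = r E" using basis_iff by auto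
  moreover have "B \<subseteq> E - X" using B indep_sub[of B] basis_iff by auto
  ultimately have "r (E - X) \<ge> r E" using rk_ge by metis
  then show "X \<in> {X. X \<subseteq> E \<and> r (E - X) = r E}" using rk_E_bound[of "E - X"] B by auto
next
  fix X assume X: "X \<in> {X. X \<subseteq> E \<and> r (E - X) = r E}"
  obtain B where B: "B \<in> indep M" "B \<subseteq> E - X" "card B = r (E - X)" using rk_obtain by blast
  then have "basis M B" using basis_iff X by auto
  then show "X \<in> indep (dual M)" using X B by (auto simp: dual_def indep_def ground_def)
qed

lemma rk_dual: assumes "A \<subseteq> E" shows "rk (dual M) A + r E = card A + r (E - A)"
proof -
  have fA: "finite A" using assms finE finite_subset by blast
  have le: "card X + r E \<le> card A + r (E - A)" if X: "X \<in> indep (dual M)" "X \<subseteq> A" for X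
  proof -
    have "r (E - X) = r E" "X \<subseteq> E" using X indep_dual by auto
    have "E - X = (E - A) \<union> (A - X)" using X assms by auto
    then have "r (E - X) \<le> r (E - A) + card (A - X)" using rk_union_card[of "A - X" "E - A"] fA by auto
    moreover have "card (A - X) = card A - card X" using card_Diff_subset[OF finite_subset[OF X(2) fA] X(2)] .
    moreover have "card X \<le> card A" using X fA card_mono by blast
    ultimately show ?thesis using \<open>r (E - X) = r E\<close> by linarith
  qed
  obtain J where J: "J \<in> indep M" "J \<subseteq> E - A" "card J = r (E - A)" using rk_obtain by blast
  obtain B where B: "B \<in> indep M" "J \<subseteq> B" "B \<subseteq> E" "card B = r E" using extend[of J E] J by blast
  let ?X = "A - B"
  have BA: "B \<inter> (E - A) \<in> indep M" using B indep_down by blast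
  have c1: "card (B \<inter> (E - A)) \<le> r (E - A)" using rk_ge[OF BA] by blast
  have c2: "card J \<le> card (B \<inter> (E - A))" using J B indep_fin[OF B(1)] by (intro card_mono) auto
  have fB: "finite B" using indep_fin B by auto
  have "B = (B \<inter> (E - A)) \<union> (B \<inter> A)" using B by auto
  then have "card B = card (B \<inter> (E - A)) + card (B \<inter> A)"
    using card_Un_disjoint[of "B \<inter> (E - A)" "B \<inter> A"] fB by auto
  moreover have "?X = A - (B \<inter> A)" by auto
  then have "card ?X = card A - card (B \<inter> A)"
    using card_Diff_subset[of "B \<inter> A" A] fA by auto
  moreover have "card (B \<inter> A) \<le> card A" using fA card_mono[of A "B \<inter> A"] by auto
  ultimately have cX: "card ?X + r E = card A + r (E - A)" using c1 c2 J B by linarith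
  have Xind: "?X \<in> indep (dual M)"
  proof -
    have "B \<subseteq> E - ?X" using B by auto
    then have "r (E - ?X) \<ge> r E" using rk_ge[OF B(1)] B by auto
    then show ?thesis using indep_dual rk_E_bound[of "E - ?X"] assms by auto
  qed
  have "rk (dual M) A = card ?X"
    unfolding rk_def
  proof (rule Max_eqI)
    show "finite (card ` {I \<in> indep (dual M). I \<subseteq> A})" using fA by simp
    show "card ?X \<in> card ` {I \<in> indep (dual M). I \<subseteq> A}" using Xind by auto
    fix y assume "y \<in> card ` {I \<in> indep (dual M). I \<subseteq> A}"
    then obtain X where "X \<in> indep (dual M)" "X \<subseteq> A" "y = card X" by auto
    then show "y \<le> card ?X" using le cX by fastforce
  qed
  then show ?thesis using cX by simp
qed

lemma rk_empty: "r {} = 0" using rk_le_card[of "{}"] by simp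

lemma rk_dual_E: "rk (dual M) E + r E = card E"
  using rk_dual[of E] rk_empty by simp

lemma paving_dual_iff: "paving (dual M) \<longleftrightarrow> DPAV"
proof
  assume p: "paving (dual M)"
  show DPAV unfolding DPAV_def
  proof (intro allI impI)
    fix S assume S: "S \<subseteq> E" "card S > r E"
    show "r S = r E"
    proof (rule ccontr)
      assume ne: "r S \<noteq> r E"
      let ?P = "\<lambda>D. r (E - D) \<noteq> r E"
      have "?P (E - S)" using ne S by (simp add: Diff_Diff_Int Int_absorb1)
      then obtain D where D: "D \<subseteq> E - S" "?P D" "\<forall>x\<in>D. \<not> ?P (D - {x})"
        using minimal_ex[of "E - S" ?P] finE by blast
      have "circuit (dual M) D" unfolding circuit_def ground_dual indep_dual using D by auto
      then have "card D \<ge> rk (dual M) E" using p unfolding paving_def ground_dual by blast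
      moreover have "card D \<le> card (E - S)" using D(1) finE card_mono by blast
      moreover have "card (E - S) = card E - card S" using S finE card_Diff_subset finite_subset by metis
      moreover have "card S \<le> card E" using S finE card_mono by blast
      ultimately show False using S rk_dual_E by linarith
    qed
  qed
next
  assume p: DPAV
  show "paving (dual M)" unfolding paving_def ground_dual
  proof (intro allI impI)
    fix C assume c: "circuit (dual M) C"
    then have C: "C \<subseteq> E" "r (E - C) \<noteq> r E" unfolding circuit_def ground_dual indep_dual by auto
    then have "card (E - C) \<le> r E" using p unfolding DPAV_def by (meson Diff_subset not_le)
    moreover have "card (E - C) = card E - card C" using C finE card_Diff_subset finite_subset by metis
    moreover have "card C \<le> card E" using C finE card_mono by blast
    ultimately show "rk (dual M) E \<le> card C" using rk_dual_E by linarith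
  qed
qed

end



context matr
begin

lemma ground_contract: "ground (contract M C) = E - C"
  by (simp add: contract_def dual_def delete_def ground_def)

lemma indep_contract_raw: "indep (contract M C) =
  {Y. Y \<subseteq> E - C \<and> (\<exists>B'. basis (delete (dual M) C) B' \<and> Y \<inter> B' = {})}"
  by (simp add: contract_def dual_def delete_def ground_def indep_def)

lemma indep_del_dual: "indep (delete (dual M) C) = {X. X \<subseteq> E \<and> (\<exists>B. basis M B \<and> X \<inter> B = {}) \<and> X \<inter> C = {}}"
  by (auto simp: dual_def delete_def ground_def indep_def)

lemma card_split: assumes "finite A" shows "card A = card (A - C) + card (A \<inter> C)"
proof -
  have "card A = card ((A - C) \<union> (A \<inter> C))" by (simp add: Un_Diff_Int)
  also have "\<dots> = card (A - C) + card (A \<inter> C)" using assms by (intro card_Un_disjoint) auto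
  finally show ?thesis .
qed

lemma basis_card: "basis M B \<Longrightarrow> card B = r E" using basis_iff by auto
lemma basis_indep: "basis M B \<Longrightarrow> B \<in> indep M" using basis_iff by auto

lemma K1: assumes C: "C \<subseteq> E" and B: "basis M B" and BC: "card (B \<inter> C) = r C"
  shows "basis (delete (dual M) C) (E - C - B)"
  unfolding basis_def
proof (intro conjI ballI impI)
  show "E - C - B \<in> indep (delete (dual M) C)" unfolding indep_del_dual using B by auto
  fix X assume X: "X \<in> indep (delete (dual M) C)" "E - C - B \<subseteq> X"
  then obtain B2 where B2: "X \<subseteq> E" "basis M B2" "X \<inter> B2 = {}" "X \<inter> C = {}"
    unfolding indep_del_dual by auto
  have sub: "B2 - C \<subseteq> B - C" using X(2) B2 indep_sub[OF basis_indep[OF B2(2)]] by auto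
  have fB: "finite B" "finite B2" using B B2 indep_fin basis_indep by auto
  have "card (B2 \<inter> C) \<le> r C" using rk_ge[of "B2 \<inter> C" C] indep_down[OF basis_indep[OF B2(2)]] by auto
  moreover have "card B2 = card (B2 - C) + card (B2 \<inter> C)"
    using card_split fB by blast
  moreover have "card B = card (B - C) + card (B \<inter> C)"
    using card_split fB by blast
  moreover have "card B = card B2" using B B2 basis_card by auto
  ultimately have "card (B - C) \<le> card (B2 - C)" using BC by linarith
  then have "B2 - C = B - C" using sub card_seteq[of "B - C" "B2 - C"] fB by auto
  then show "X = E - C - B" using X(2) B2 by auto
qed

lemma K2: assumes C: "C \<subseteq> E" and B': "basis (delete (dual M) C) B'"
  shows "\<exists>B. basis M B \<and> B' = E - C - B \<and> card (B \<inter> C) = r C"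
proof -
  have B'i: "B' \<in> indep (delete (dual M) C)" and B'max: "\<forall>X\<in>indep (delete (dual M) C). B' \<subseteq> X \<longrightarrow> X = B'"
    using B' unfolding basis_def by auto
  then obtain B where B: "B' \<subseteq> E" "basis M B" "B' \<inter> B = {}" "B' \<inter> C = {}" unfolding indep_del_dual by auto
  have memb: "E - C - B3 \<in> indep (delete (dual M) C)" if "basis M B3" for B3
    unfolding indep_del_dual using that by auto
  have eq: "B' = E - C - B" using B'max memb[OF B(2)] B by auto
  have Bi: "B \<in> indep M" using B basis_indep by auto
  have fB: "finite B" using Bi indep_fin by auto
  have "card (B \<inter> C) \<le> r C" using rk_ge[of "B \<inter> C" C] indep_down[OF Bi] by auto
  moreover have "\<not> card (B \<inter> C) < r C"
  proof
    assume lt: "card (B \<inter> C) < r C"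
    obtain K where K: "K \<in> indep M" "B \<inter> C \<subseteq> K" "K \<subseteq> C" "card K = r C"
      using extend[of "B \<inter> C" C] indep_down[OF Bi] by auto
    have "\<not> K \<subseteq> B \<inter> C"
    proof
      assume "K \<subseteq> B \<inter> C"
      then have "card K \<le> card (B \<inter> C)" using fB by (intro card_mono) auto
      then show False using lt K(4) by simp
    qed
    then obtain x where x: "x \<in> K" "x \<notin> B \<inter> C" by blast
    have xC: "x \<in> C" "x \<notin> B" using x K by auto
    have ins: "insert x (B \<inter> C) \<in> indep M" using K x indep_down by auto
    obtain K3 where K3: "K3 \<in> indep M" "insert x (B \<inter> C) \<subseteq> K3" "K3 \<subseteq> insert x B" "card K3 = r (insert x B)"
      using extend[OF ins, of "insert x B"] by auto
    have "r (insert x B) \<ge> r E"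
      using rk_ge[OF Bi, of "insert x B"] basis_card[OF B(2)] by auto
    then have "card K3 = r E" using K3(4) rk_E_bound[of "insert x B"] by simp
    then have K3b: "basis M K3" using K3 basis_iff by auto
    have "E - C - B \<subseteq> E - C - K3" using K3 xC by auto
    then have "E - C - K3 = E - C - B" using B'max memb[OF K3b] eq by auto
    then have "K3 - C = B - C" using indep_sub[OF K3(1)] indep_sub[OF Bi] by auto
    then have "insert x B \<subseteq> K3" using K3 by auto
    then have "card (insert x B) \<le> card K3" using indep_fin[OF K3(1)] card_mono by blast
    then show False using xC fB \<open>card K3 = r E\<close> basis_card[OF B(2)] by simp
  qed
  ultimately show ?thesis using eq B by auto
qed

lemma indep_contract:
  assumes C: "C \<subseteq> E" and I: "I \<in> indep M" "I \<subseteq> C" "card I = r C"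
  shows "indep (contract M C) = {Y. Y \<subseteq> E - C \<and> Y \<union> I \<in> indep M}"
proof (intro set_eqI iffI)
  fix Y assume "Y \<in> indep (contract M C)"
  then obtain B' where Y: "Y \<subseteq> E - C" "basis (delete (dual M) C) B'" "Y \<inter> B' = {}"
    unfolding indep_contract_raw by auto
  obtain B where B: "basis M B" "B' = E - C - B" "card (B \<inter> C) = r C" using K2[OF C Y(2)] by auto
  have YB: "Y \<subseteq> B" using Y B by auto
  have "Y \<union> (B \<inter> C) \<in> indep M" using YB indep_down[OF basis_indep[OF B(1)]] by auto
  then have "card (Y \<union> (B \<inter> C)) \<le> r (Y \<union> C)" using rk_ge[of "Y \<union> (B \<inter> C)" "Y \<union> C"] by auto
  moreover have fY: "finite Y" using Y(1) finE by (meson Diff_subset finite_subset subset_trans)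
  moreover have "card (Y \<union> (B \<inter> C)) = card Y + card (B \<inter> C)"
    using Y fY indep_fin[OF basis_indep[OF B(1)]] by (intro card_Un_disjoint) auto
  moreover have "r (Y \<union> C) + r I \<le> r (Y \<union> I) + r C"
  proof -
    have e1: "(Y \<union> I) \<union> C = Y \<union> C" using I by auto
    have e2: "(Y \<union> I) \<inter> C = I" using Y I by auto
    show ?thesis using submod[of "Y \<union> I" C] unfolding e1 e2 .
  qed
  moreover have "r I = card I" using indep_rk I by auto
  moreover have "card (Y \<union> I) = card Y + card I"
    using Y fY indep_fin[OF I(1)] I by (intro card_Un_disjoint) auto
  moreover have "r (Y \<union> I) \<le> card (Y \<union> I)" using fY indep_fin[OF I(1)] rk_le_card by auto
  ultimately have "r (Y \<union> I) = card (Y \<union> I)" using B I by linarith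
  moreover have "Y \<union> I \<subseteq> E" using Y I C by auto
  ultimately show "Y \<in> {Y. Y \<subseteq> E - C \<and> Y \<union> I \<in> indep M}" using rk_indep Y by auto
next
  fix Y assume "Y \<in> {Y. Y \<subseteq> E - C \<and> Y \<union> I \<in> indep M}"
  then have Y: "Y \<subseteq> E - C" "Y \<union> I \<in> indep M" by auto
  obtain B where B: "basis M B" "Y \<union> I \<subseteq> B" using basis_exists_sup[OF Y(2)] by auto
  have "card (B \<inter> C) \<le> r C" using rk_ge[of "B \<inter> C" C] indep_down[OF basis_indep[OF B(1)]] by auto
  moreover have "card I \<le> card (B \<inter> C)" using B I indep_fin[OF basis_indep[OF B(1)]] by (intro card_mono) auto
  ultimately have "card (B \<inter> C) = r C" using I by auto
  then have "basis (delete (dual M) C) (E - C - B)" using K1[OF C B(1)] by auto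
  moreover have "Y \<inter> (E - C - B) = {}" using B by auto
  ultimately show "Y \<in> indep (contract M C)" unfolding indep_contract_raw using Y by auto
qed

end



lemma indep_delete: "indep (delete X D) = {Y \<in> indep X. Y \<inter> D = {}}"
  by (simp add: delete_def indep_def)
lemma ground_delete: "ground (delete X D) = ground X - D"
  by (simp add: delete_def ground_def)

abbreviation "WW \<equiv> dsum (U 2 2) (U 0 2)"

lemma two_set: "{0..<2::nat} = {0,1}" by auto

lemma W_ground: "ground WW = {Inl 0, Inl 1, Inr 0, Inr 1}"
  by (auto simp: dsum_def U_def ground_def two_set)

lemma W_indep: "indep WW = Pow {Inl 0, Inl 1}"
proof (intro set_eqI iffI)
  fix Z assume "Z \<in> indep WW"
  then obtain I J where Z: "Z = Inl ` I \<union> Inr ` J" "I \<subseteq> {0,1}" "J \<subseteq> {0,1}" "card J \<le> 0"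
    by (auto simp: dsum_def U_def indep_def two_set)
  have "finite J" using Z(3) finite_subset by auto
  then have "J = {}" using Z(4) by simp
  then show "Z \<in> Pow {Inl 0, Inl 1}" using Z by auto
next
  fix Z :: "(nat + nat) set" assume Z: "Z \<in> Pow {Inl 0, Inl 1}"
  let ?I = "{n. Inl n \<in> Z}"
  have e: "Z = Inl ` ?I \<union> Inr ` {}" using Z by auto
  have s: "?I \<subseteq> {0,1}" using Z by auto
  then have "card ?I \<le> card {0::nat,1}" by (intro card_mono) auto
  then have "card ?I \<le> 2" by simp
  then have "?I \<in> {X. X \<subseteq> {0..<2} \<and> card X \<le> 2}" using s two_set by auto
  moreover have "({}::nat set) \<in> {X. X \<subseteq> {0..<2} \<and> card X \<le> 0}" by simp
  ultimately show "Z \<in> indep WW" unfolding dsum_def U_def indep_def snd_conv using e by blast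
qed

lemma two_elems: assumes "2 \<le> card A" shows "\<exists>x y. x \<in> A \<and> y \<in> A \<and> x \<noteq> y"
proof (rule ccontr)
  assume h: "\<not> ?thesis"
  have "A \<noteq> {}" using assms by auto
  then obtain x where "x \<in> A" by blast
  then have "A = {x}" using h by blast
  then show False using assms by simp
qed

context matr
begin

lemma notNB_minor:
  assumes S: "S \<subseteq> E" "r S + 2 \<le> r E" "card S > r S + 1"
  shows "\<exists>N. minor N M \<and> iso N WW"
proof -
  obtain I where I: "I \<in> indep M" "I \<subseteq> S" "card I = r S" using rk_obtain by blast
  have fS: "finite S" using S finE finite_subset by blast
  have fI: "finite I" using I indep_fin by auto
  have "card (S - I) \<ge> 2" using card_Diff_subset[OF fI I(2)] S I by linarith
  then obtain c d where cd: "c \<in> S - I" "d \<in> S - I" "c \<noteq> d" using two_elems by blast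
  have ncd: "insert x I \<notin> indep M" if "x \<in> S - I" for x
  proof
    assume "insert x I \<in> indep M"
    then have "card (insert x I) \<le> r S" using rk_ge that I by auto
    then show False using that fI I by simp
  qed
  obtain B where B: "basis M B" "I \<subseteq> B" using basis_exists_sup[OF I(1)] by auto
  have Bi: "B \<in> indep M" using B basis_indep by auto
  have fB: "finite B" using Bi indep_fin by auto
  have "card (B - I) \<ge> 2" using card_Diff_subset[OF fI B(2)] basis_card[OF B(1)] S I by linarith
  then obtain a b where ab: "a \<in> B - I" "b \<in> B - I" "a \<noteq> b" using two_elems by blast
  have insB: "insert x I \<in> indep M" if "x \<in> B - I" for x using that B Bi indep_down[of B "insert x I"] by auto
  have dist: "a \<noteq> c" "a \<noteq> d" "b \<noteq> c" "b \<noteq> d"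
    using insB[OF ab(1)] insB[OF ab(2)] ncd[OF cd(1)] ncd[OF cd(2)] by auto
  have inE: "a \<in> E" "b \<in> E" "c \<in> E" "d \<in> E" using ab cd S indep_sub[OF Bi] by auto
  have IE: "I \<subseteq> E" using I indep_sub by auto
  define D where "D = E - I - {a,b,c,d}"
  define N where "N = delete (contract M I) D"
  have IC: "indep (contract M I) = {Y. Y \<subseteq> E - I \<and> Y \<union> I \<in> indep M}"
    using indep_contract[OF IE I(1) order_refl] indep_rk[OF I(1)] by auto
  have gN: "ground N = {a,b,c,d}"
    unfolding N_def D_def ground_delete ground_contract
    using inE ab cd by auto
  have iN: "indep N = {Y. Y \<subseteq> E - I \<and> Y \<union> I \<in> indep M \<and> Y \<inter> D = {}}"
    unfolding N_def indep_delete IC by blast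
  have minor: "minor N M" unfolding minor_def N_def
    using IE D_def by (intro exI[of _ I] exI[of _ D]) auto
  define f where "f = (\<lambda>x. if x = a then Inl (0::nat) else if x = b then Inl 1 else if x = c then Inr (0::nat) else Inr 1)"
  have fv: "f a = Inl 0" "f b = Inl 1" "f c = Inr 0" "f d = Inr 1"
    using dist ab cd unfolding f_def by auto
  have bij: "bij_betw f (ground N) (ground WW)"
    unfolding gN W_ground bij_betw_def inj_on_def using fv dist ab cd by auto
  have key: "X \<in> indep N \<longleftrightarrow> f ` X \<in> indep WW" if X: "X \<subseteq> ground N" for X
  proof -
    have "X \<in> indep N \<longleftrightarrow> c \<notin> X \<and> d \<notin> X"
    proof
      assume "X \<in> indep N"
      then have XI: "X \<union> I \<in> indep M" using iN by auto
      show "c \<notin> X \<and> d \<notin> X"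
        using indep_down[OF XI, of "insert c I"] indep_down[OF XI, of "insert d I"] ncd cd by auto
    next
      assume "c \<notin> X \<and> d \<notin> X"
      then have "X \<subseteq> {a,b}" using X gN by auto
      then have "X \<union> I \<subseteq> B" using ab B by auto
      then have "X \<union> I \<in> indep M" using indep_down[OF Bi] by auto
      moreover have "X \<subseteq> E - I" "X \<inter> D = {}" using X gN inE ab cd D_def by auto
      ultimately show "X \<in> indep N" using iN by auto
    qed
    moreover have "f ` X \<in> indep WW \<longleftrightarrow> c \<notin> X \<and> d \<notin> X"
      unfolding W_indep using X gN fv by auto
    ultimately show ?thesis by simp
  qed
  have "iso N WW" unfolding iso_def using bij key by blast
  then show ?thesis using minor by blast
qed

lemma minor_notNB:
  assumes mn: "minor N M" and iso: "iso N WW"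
  shows "\<not> NB"
proof -
  obtain C D where CD: "C \<subseteq> E" "D \<subseteq> E" "C \<inter> D = {}" "N = delete (contract M C) D"
    using mn unfolding minor_def by blast
  obtain I where I: "I \<in> indep M" "I \<subseteq> C" "card I = r C" using rk_obtain by blast
  have gN: "ground N = E - C - D" unfolding CD(4) ground_delete ground_contract ..
  have iN: "indep N = {Y. Y \<subseteq> E - C \<and> Y \<union> I \<in> indep M \<and> Y \<inter> D = {}}"
    unfolding CD(4) indep_delete indep_contract[OF CD(1) I] by blast
  obtain f where f: "bij_betw f (ground N) (ground WW)"
    "\<forall>X. X \<subseteq> ground N \<longrightarrow> (X \<in> indep N \<longleftrightarrow> f ` X \<in> indep WW)"
    using iso unfolding iso_def by blast
  have surj: "f ` ground N = ground WW" using bij_betw_imp_surj_on[OF f(1)] .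
  have im: "Inl 0 \<in> f ` ground N" "Inl 1 \<in> f ` ground N" "Inr 0 \<in> f ` ground N" "Inr 1 \<in> f ` ground N"
    unfolding surj W_ground by auto
  obtain a where a': "Inl 0 = f a" "a \<in> ground N" using im(1) by (rule imageE)
  obtain b where b': "Inl 1 = f b" "b \<in> ground N" using im(2) by (rule imageE)
  obtain c where c': "Inr 0 = f c" "c \<in> ground N" using im(3) by (rule imageE)
  obtain d where d': "Inr 1 = f d" "d \<in> ground N" using im(4) by (rule imageE)
  have a: "a \<in> ground N" "f a = Inl 0" using a' by auto
  have b: "b \<in> ground N" "f b = Inl 1" using b' by auto
  have c: "c \<in> ground N" "f c = Inr 0" using c' by auto
  have d: "d \<in> ground N" "f d = Inr 1" using d' by auto
  have "f ` {a,b} \<in> indep WW" using a b W_indep by auto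
  then have "{a,b} \<in> indep N" using f(2) a b by auto
  then have abI: "{a,b} \<union> I \<in> indep M" using iN by auto
  have cn: "insert c I \<notin> indep M"
  proof
    assume h: "insert c I \<in> indep M"
    have "{c} \<in> indep N" using iN h c gN by auto
    then have "f ` {c} \<in> indep WW" using f(2) c by auto
    then show False using c W_indep by auto
  qed
  have dn: "insert d I \<notin> indep M"
  proof
    assume h: "insert d I \<in> indep M"
    have "{d} \<in> indep N" using iN h d gN by auto
    then have "f ` {d} \<in> indep WW" using f(2) d by auto
    then show False using d W_indep by auto
  qed
  have dist: "a \<noteq> b" "c \<noteq> d" using a b c d by auto
  have nI: "a \<notin> I" "b \<notin> I" "c \<notin> I" "d \<notin> I" using a b c d gN I by auto
  have fI: "finite I" using I indep_fin by auto
  let ?S = "insert c (insert d I)"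
  have SE: "?S \<subseteq> E" using c d gN I indep_sub by auto
  have rS: "r ?S \<le> card I"
  proof (rule ccontr)
    assume "\<not> ?thesis"
    obtain K where K: "K \<in> indep M" "K \<subseteq> ?S" "card K = r ?S" using rk_obtain by blast
    then obtain y where y: "y \<in> K - I" "insert y I \<in> indep M"
      using indep_aug[OF I(1) K(1)] \<open>\<not> r ?S \<le> card I\<close> by auto
    then have "y = c \<or> y = d" using K by auto
    then show False using y cn dn by auto
  qed
  have cS: "card ?S = card I + 2" using fI nI dist by simp
  have "card ({a,b} \<union> I) = card I + 2" using fI nI dist by simp
  then have "card I + 2 \<le> r E" using rk_ge[OF abI] SE abI indep_sub by auto
  show "\<not> NB"
  proof
    assume NB
    then have "r ?S + 2 \<le> r E \<longrightarrow> card ?S \<le> r ?S + 1" using SE unfolding NB_def by blast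
    then show False using rS cS \<open>card I + 2 \<le> r E\<close> by linarith
  qed
qed

lemma tt_iff: "two_two_uniform M \<longleftrightarrow> NB"
proof
  assume "two_two_uniform M"
  then have h: "\<not> (\<exists>N. minor N M \<and> iso N WW)" unfolding two_two_uniform_def by blast
  show NB unfolding NB_def
  proof (intro allI impI)
    fix S assume "S \<subseteq> E" "r S + 2 \<le> r E"
    then show "card S \<le> r S + 1" using notNB_minor[of S] h by force
  qed
next
  assume NB then show "two_two_uniform M" unfolding two_two_uniform_def using minor_notNB by blast
qed

end



context matr
begin

lemma rk_union_le: "r (A \<union> B) \<le> r A + r B"
  using submod[of A B] by linarith

lemma matroid_delete: "matroid (delete M D)"
  unfolding matroid_def ground_delete indep_delete
proof (intro conjI allI impI ballI)
  show "finite (E - D)" using finE by simp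
  fix I assume "I \<in> {Y \<in> indep M. Y \<inter> D = {}}"
  then show "I \<subseteq> E - D" using indep_sub by auto
next
  show "{} \<in> {Y \<in> indep M. Y \<inter> D = {}}" using indep_empty by auto
next
  fix X Y assume "Y \<in> {Y \<in> indep M. Y \<inter> D = {}}" "X \<subseteq> Y"
  then show "X \<in> {Y \<in> indep M. Y \<inter> D = {}}" using indep_down by auto
next
  fix X Y assume a: "X \<in> {Y \<in> indep M. Y \<inter> D = {}}" "Y \<in> {Y \<in> indep M. Y \<inter> D = {}}" "card X < card Y"
  then obtain y where "y \<in> Y - X" "insert y X \<in> indep M" using indep_aug[of X Y] by auto
  then show "\<exists>y\<in>Y - X. insert y X \<in> {Y \<in> indep M. Y \<inter> D = {}}" using a by auto
qed

lemma rk_delete: "rk (delete M D) S = r (S - D)"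
proof -
  have "{I \<in> indep (delete M D). I \<subseteq> S} = {I \<in> indep M. I \<subseteq> S - D}"
    unfolding indep_delete by auto
  then show ?thesis unfolding rk_def by simp
qed

lemma matroid_dual: "matroid (dual M)"
  unfolding matroid_def ground_dual indep_dual
proof (intro conjI allI impI ballI)
  show "finite E" using finE .
  fix I assume "I \<in> {X. X \<subseteq> E \<and> r (E - X) = r E}" then show "I \<subseteq> E" by auto
next
  show "{} \<in> {X. X \<subseteq> E \<and> r (E - X) = r E}" by simp
next
  fix X Y assume a: "Y \<in> {X. X \<subseteq> E \<and> r (E - X) = r E}" "X \<subseteq> Y"
  then have "r (E - Y) \<le> r (E - X)" by (intro rk_mono) auto
  then show "X \<in> {X. X \<subseteq> E \<and> r (E - X) = r E}" using a rk_E_bound[of "E - X"] by auto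
next
  fix X Y assume X: "X \<in> {X. X \<subseteq> E \<and> r (E - X) = r E}" and Y: "Y \<in> {X. X \<subseteq> E \<and> r (E - X) = r E}"
    and c: "card X < card Y"
  show "\<exists>y\<in>Y - X. insert y X \<in> {X. X \<subseteq> E \<and> r (E - X) = r E}"
  proof (rule ccontr)
    assume h: "\<not> ?thesis"
    have XE: "X \<subseteq> E" "r (E - X) = r E" and YE: "Y \<subseteq> E" "r (E - Y) = r E" using X Y by auto
    have fX: "finite X" "finite Y" using XE YE finE finite_subset by auto
    have co: "r (E - X - {y}) < r E" if "y \<in> Y - X" for y
    proof -
      have "\<not> (r (E - insert y X) = r E)" using h that YE XE(1) by auto
      moreover have "r (E - insert y X) \<le> r E" by (rule rk_E_bound)
      moreover have "E - insert y X = E - X - {y}" by auto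
      ultimately show ?thesis by auto
    qed
    let ?Z = "E - (X \<union> Y)"
    obtain J where J: "J \<in> indep M" "J \<subseteq> ?Z" "card J = r ?Z" using rk_obtain by blast
    obtain K where K: "K \<in> indep M" "J \<subseteq> K" "K \<subseteq> E - X" "card K = r (E - X)"
      using extend[of J "E - X"] J by auto
    have YK: "Y - X \<subseteq> K"
    proof
      fix y assume y: "y \<in> Y - X"
      show "y \<in> K"
      proof (rule ccontr)
        assume "y \<notin> K"
        then have "K \<subseteq> E - X - {y}" using K by auto
        then have "card K \<le> r (E - X - {y})" using rk_ge[OF K(1)] by blast
        then show False using co[OF y] K XE by auto
      qed
    qed
    have fK: "finite K" using K indep_fin by auto
    have "J \<inter> (Y - X) = {}" using J by auto
    then have "card J + card (Y - X) = card (J \<union> (Y - X))"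
      using finite_subset[OF K(2) fK] finite_subset[OF YK fK] by (intro card_Un_disjoint[symmetric]) auto
    also have "\<dots> \<le> card K" using J K YK fK by (intro card_mono) auto
    finally have c1: "r ?Z + card (Y - X) \<le> r E" using J K XE by auto
    have "E - Y = ?Z \<union> (X - Y)" using XE by auto
    then have "r (E - Y) \<le> r ?Z + card (X - Y)" using rk_union_card[of "X - Y" ?Z] fX by auto
    moreover have "card (X - Y) < card (Y - X)"
    proof -
      have "card X = card (X - Y) + card (X \<inter> Y)" "card Y = card (Y - X) + card (Y \<inter> X)"
        using fX card_split by auto
      then show ?thesis using c by (simp add: Int_commute)
    qed
    ultimately show False using c1 YE by linarith
  qed
qed

lemma dual_dual: "dual (dual M) = M"
proof -
  interpret D: matr "dual M" by (rule matr.intro, rule matroid_dual)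
  have g: "ground (dual (dual M)) = E" by (simp add: D.ground_dual ground_dual)
  have DI: "indep (dual (dual M)) = {X. X \<subseteq> E \<and> rk (dual M) (E - X) = rk (dual M) E}"
    using D.indep_dual unfolding ground_dual .
  have i: "indep (dual (dual M)) = indep M"
  proof (intro set_eqI iffI)
    fix X assume "X \<in> indep (dual (dual M))"
    then have X: "X \<subseteq> E" "rk (dual M) (E - X) = rk (dual M) E"
      unfolding DI by simp_all
    have ee: "E - (E - X) = X" using X by auto
    have "rk (dual M) (E - X) + r E = card (E - X) + r X" using rk_dual[of "E - X"] unfolding ee by auto
    moreover have "card (E - X) = card E - card X" using card_Diff_subset[OF finite_subset[OF X(1) finE] X(1)] .
    moreover have "card X \<le> card E" using X finE card_mono by auto
    ultimately have "r X = card X" using X rk_dual_E by linarith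
    then show "X \<in> indep M" using rk_indep X by auto
  next
    fix X assume Xi: "X \<in> indep M"
    then have X: "X \<subseteq> E" "r X = card X" using indep_sub indep_rk by auto
    have ee: "E - (E - X) = X" using X by auto
    have "rk (dual M) (E - X) + r E = card (E - X) + r X" using rk_dual[of "E - X"] unfolding ee by auto
    moreover have "card (E - X) = card E - card X" using card_Diff_subset[OF finite_subset[OF X(1) finE] X(1)] .
    moreover have "card X \<le> card E" using X finE card_mono by auto
    ultimately have "rk (dual M) (E - X) = rk (dual M) E" using X rk_dual_E by linarith
    then show "X \<in> indep (dual (dual M))" using X unfolding DI by simp
  qed
  show ?thesis using g i unfolding ground_def indep_def by (simp add: prod_eq_iff)
qed

lemma sep_add: assumes X: "X \<subseteq> E" "r X + r (E - X) = r E" and S: "S \<subseteq> E"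
  shows "r S = r (S \<inter> X) + r (S - X)"
proof -
  have "r S \<le> r (S \<inter> X) + r (S - X)" using rk_union_le[of "S \<inter> X" "S - X"] by (simp add: Int_Diff_Un)
  moreover have "r E + r (S \<inter> X) \<le> r X + r ((S \<inter> X) \<union> (E - X))"
  proof -
    have e1: "X \<union> ((S \<inter> X) \<union> (E - X)) = E" using X by auto
    have e2: "X \<inter> ((S \<inter> X) \<union> (E - X)) = S \<inter> X" by auto
    show ?thesis using submod[of X "(S \<inter> X) \<union> (E - X)"] unfolding e1 e2 by simp
  qed
  moreover have "r ((S \<inter> X) \<union> (E - X)) + r (S - X) \<le> r S + r (E - X)"
  proof -
    have e1: "S \<union> (E - X) = (S \<inter> X) \<union> (E - X)" using S by auto
    have e2: "S \<inter> (E - X) = S - X" using S by auto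
    show ?thesis using submod[of S "E - X"] unfolding e1 e2 by simp
  qed
  ultimately show ?thesis using X by linarith
qed

lemma PAV_small: assumes p: PAV and S: "S \<subseteq> E" "r S + 2 \<le> r E" shows "card S = r S"
proof (rule ccontr)
  assume ne: "card S \<noteq> r S"
  have fS: "finite S" using finite_subset[OF S(1) finE] .
  have "r S \<le> card S" using rk_le_card[OF fS] .
  then have cs: "r S + 1 \<le> card S" using ne by linarith
  obtain T where T: "T \<subseteq> S" "card T = r S + 1" using obtain_subset_with_card_n[OF cs] by metis
  have TE: "T \<subseteq> E" using T(1) S(1) by (rule subset_trans)
  have "card T < r E" using T(2) S(2) by linarith
  then have "r T = card T" using p TE unfolding PAV_def by blast
  moreover have "r T \<le> r S" using rk_mono[OF T(1)] .
  ultimately show False using T(2) by linarith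
qed

lemma PAV_NB: assumes PAV shows NB
  unfolding NB_def
proof (intro allI impI)
  fix S assume "S \<subseteq> E" "r S + 2 \<le> r E"
  then have "card S = r S" using PAV_small[OF assms] by blast
  then show "card S \<le> r S + 1" by simp
qed

lemma DPAV_NB: assumes p: DPAV shows NB
  unfolding NB_def
proof (intro allI impI)
  fix S assume S: "S \<subseteq> E" "r S + 2 \<le> r E"
  show "card S \<le> r S + 1"
  proof (rule ccontr)
    assume cS: "\<not> card S \<le> r S + 1"
    have fS: "finite S" using finite_subset[OF S(1) finE] .
    obtain I where I: "I \<in> indep M" "I \<subseteq> S" "card I = r S" using rk_obtain by blast
    obtain B where B: "basis M B" "I \<subseteq> B" using basis_exists_sup[OF I(1)] by blast
    have Bi: "B \<in> indep M" using basis_indep[OF B(1)] .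
    have fI: "finite I" using indep_fin[OF I(1)] .
    have fB: "finite B" using indep_fin[OF Bi] .
    have cB: "card B = r E" using basis_card[OF B(1)] .
    have "card (B - I) = card B - card I" using card_Diff_subset[OF fI B(2)] .
    then have cs: "r E - 1 - r S \<le> card (B - I)" using cB I(3) by linarith
    obtain T where T: "T \<subseteq> B - I" "card T = r E - 1 - r S"
      using obtain_subset_with_card_n[OF cs] by metis
    have TS: "T \<inter> S = {}"
    proof (rule ccontr)
      assume "T \<inter> S \<noteq> {}"
      then obtain t where t: "t \<in> T" "t \<in> S" by blast
      have tB: "t \<in> B" "t \<notin> I" using t(1) T(1) by auto
      have "insert t I \<subseteq> B" using tB B(2) by blast
      then have ti: "insert t I \<in> indep M" using indep_down[OF Bi] by blast
      have "insert t I \<subseteq> S" using t(2) I(2) by blast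
      then have "card (insert t I) \<le> r S" using rk_ge[OF ti] by blast
      moreover have "card (insert t I) = card I + 1" using fI tB(2) by simp
      ultimately show False using I(3) by linarith
    qed
    have fT: "finite T" using finite_subset[OF T(1)] fB by blast
    have r1: "r (S \<union> T) \<le> r S + card T" using rk_union_card[OF fT] .
    have c1: "card (S \<union> T) = card S + card T" using card_Un_disjoint[OF fS fT] TS by (simp add: Int_commute)
    have SE: "S \<union> T \<subseteq> E" using S(1) T(1) indep_sub[OF Bi] by blast
    have "card (S \<union> T) > r E" using c1 cS T(2) S(2) by linarith
    then have "r (S \<union> T) = r E" using p SE unfolding DPAV_def by blast
    then show False using r1 T(2) S(2) by linarith
  qed
qed

end



lemma ground_dsum: "ground (dsum A B) = Inl ` ground A \<union> Inr ` ground B"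
  by (simp add: dsum_def ground_def)
lemma indep_dsum: "indep (dsum A B) = {Inl ` I \<union> Inr ` J | I J. I \<in> indep A \<and> J \<in> indep B}"
  by (simp add: dsum_def indep_def)

lemma sum_img_eq: "Inl ` I \<union> Inr ` J = Inl ` I' \<union> Inr ` J' \<Longrightarrow> I = I' \<and> J = J'"
  by (auto simp: set_eq_iff image_iff)

lemma sum_img_parts: "Inl ` (Inl -` Z) \<union> Inr ` (Inr -` Z) = Z"
proof (intro set_eqI iffI)
  fix x assume "x \<in> Z" then show "x \<in> Inl ` (Inl -` Z) \<union> Inr ` (Inr -` Z)" by (cases x) auto
qed auto

lemma card_sum: fixes I :: "'a set" and J :: "'b set"
  shows "finite I \<Longrightarrow> finite J \<Longrightarrow> card (Inl ` I \<union> Inr ` J :: ('a + 'b) set) = card I + card J"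
proof -
  assume f: "finite I" "finite J"
  have "card (Inl ` I \<union> Inr ` J :: ('a + 'b) set) = card (Inl ` I :: ('a + 'b) set) + card (Inr ` J :: ('a + 'b) set)"
    using f by (intro card_Un_disjoint) auto
  moreover have "card (Inl ` I :: ('a + 'b) set) = card I" by (rule card_image) (simp add: inj_on_def)
  moreover have "card (Inr ` J :: ('a + 'b) set) = card J" by (rule card_image) (simp add: inj_on_def)
  ultimately show ?thesis by simp
qed

lemma matroid_U: "matroid (U k n)"
  unfolding matroid_def U_def ground_def indep_def fst_conv snd_conv
proof (intro conjI allI impI ballI)
  fix X Y :: "nat set"
  assume X: "X \<in> {X. X \<subseteq> {0..<n} \<and> card X \<le> k}" and Y: "Y \<in> {X. X \<subseteq> {0..<n} \<and> card X \<le> k}"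
    and c: "card X < card Y"
  have fX: "finite X" "finite Y" using X Y finite_subset by auto
  have "\<not> Y \<subseteq> X"
  proof
    assume "Y \<subseteq> X" then have "card Y \<le> card X" using fX card_mono by blast
    then show False using c by simp
  qed
  then obtain y where y: "y \<in> Y" "y \<notin> X" by blast
  have "card (insert y X) = card X + 1" using fX y by simp
  then show "\<exists>y\<in>Y - X. insert y X \<in> {X. X \<subseteq> {0..<n} \<and> card X \<le> k}"
    using y X Y c by (intro bexI[of _ y]) auto
next
  fix X Y :: "nat set" assume "Y \<in> {X. X \<subseteq> {0..<n} \<and> card X \<le> k}" "X \<subseteq> Y"
  moreover then have "card X \<le> card Y" using finite_subset card_mono by (metis finite_atLeastLessThan mem_Collect_eq)
  ultimately show "X \<in> {X. X \<subseteq> {0..<n} \<and> card X \<le> k}" by auto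
qed auto

lemma rk_U: assumes T: "T \<subseteq> {0..<n}" shows "rk (U k n) T = min k (card T)"
  unfolding rk_def
proof (rule Max_eqI)
  have fT: "finite T" using T finite_subset by auto
  show "finite (card ` {I \<in> indep (U k n). I \<subseteq> T})"
    using fT by (intro finite_imageI) (simp add: indep_def U_def)
  fix y assume "y \<in> card ` {I \<in> indep (U k n). I \<subseteq> T}"
  then obtain I where I: "I \<in> indep (U k n)" "I \<subseteq> T" "y = card I" by auto
  then have "card I \<le> k" by (simp add: indep_def U_def)
  moreover have "card I \<le> card T" using I fT card_mono by blast
  ultimately show "y \<le> min k (card T)" using I by simp
next
  have fT: "finite T" using T finite_subset by auto
  have cs: "min k (card T) \<le> card T" by simp
  obtain I where I: "I \<subseteq> T" "card I = min k (card T)" using obtain_subset_with_card_n[OF cs] by metis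
  then have "I \<in> indep (U k n)" using T by (simp add: indep_def U_def)
  then show "min k (card T) \<in> card ` {I \<in> indep (U k n). I \<subseteq> T}" using I by force
qed

lemma rk_dsum: assumes A: "matroid A" and B: "matroid B"
  shows "rk (dsum A B) (Inl ` S \<union> Inr ` T) = rk A S + rk B T"
proof -
  interpret a: matr A by (rule matr.intro, rule A)
  interpret b: matr B by (rule matr.intro, rule B)
  show ?thesis unfolding rk_def[of "dsum A B"]
  proof (rule Max_eqI)
    have "card ` {I \<in> indep (dsum A B). I \<subseteq> Inl ` S \<union> Inr ` T} \<subseteq> {..rk A S + rk B T}"
    proof
      fix y assume "y \<in> card ` {I \<in> indep (dsum A B). I \<subseteq> Inl ` S \<union> Inr ` T}"
      then obtain Z where Z: "Z \<in> indep (dsum A B)" "Z \<subseteq> Inl ` S \<union> Inr ` T" "y = card Z" by blast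
      then obtain I J where IJ: "Z = Inl ` I \<union> Inr ` J" "I \<in> indep A" "J \<in> indep B"
        unfolding indep_dsum by blast
      have "I \<subseteq> S" using Z(2) IJ(1) by auto
      then have "card I \<le> rk A S" using a.rk_ge[OF IJ(2)] by blast
      moreover have "J \<subseteq> T" using Z(2) IJ(1) by auto
      then have "card J \<le> rk B T" using b.rk_ge[OF IJ(3)] by blast
      moreover have "card Z = card I + card J" using IJ a.indep_fin b.indep_fin card_sum by blast
      ultimately show "y \<in> {..rk A S + rk B T}" using Z(3) by simp
    qed
    then show fin: "finite (card ` {I \<in> indep (dsum A B). I \<subseteq> Inl ` S \<union> Inr ` T})"
      using finite_subset by blast
    fix y assume "y \<in> card ` {I \<in> indep (dsum A B). I \<subseteq> Inl ` S \<union> Inr ` T}"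
    then show "y \<le> rk A S + rk B T" using \<open>card ` _ \<subseteq> {..rk A S + rk B T}\<close> by auto
  next
    obtain I where I: "I \<in> indep A" "I \<subseteq> S" "card I = rk A S" using a.rk_obtain by blast
    obtain J where J: "J \<in> indep B" "J \<subseteq> T" "card J = rk B T" using b.rk_obtain by blast
    have "Inl ` I \<union> Inr ` J \<in> indep (dsum A B)" unfolding indep_dsum using I J by blast
    moreover have "Inl ` I \<union> Inr ` J \<subseteq> Inl ` S \<union> Inr ` T" using I J by auto
    moreover have "card (Inl ` I \<union> Inr ` J) = rk A S + rk B T"
      using card_sum[OF a.indep_fin[OF I(1)] b.indep_fin[OF J(1)]] I J by simp
    ultimately show "rk A S + rk B T \<in> card ` {I \<in> indep (dsum A B). I \<subseteq> Inl ` S \<union> Inr ` T}"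
      by (metis (mono_tags, lifting) image_eqI mem_Collect_eq)
  qed
qed

lemma rk_dsum_any: assumes A: "matroid A" and B: "matroid B"
  shows "rk (dsum A B) Z = rk A (Inl -` Z) + rk B (Inr -` Z)"
  using rk_dsum[OF A B, of "Inl -` Z" "Inr -` Z"] unfolding sum_img_parts .

lemma iso_rk: assumes iso: "bij_betw f (ground M) (ground N)"
  "\<forall>X. X \<subseteq> ground M \<longrightarrow> (X \<in> indep M \<longleftrightarrow> f ` X \<in> indep N)"
  and S: "S \<subseteq> ground M"
  shows "rk M S = rk N (f ` S)"
proof -
  have inj: "inj_on f (ground M)" using iso(1) bij_betw_def by blast
  have "card ` {I \<in> indep M. I \<subseteq> S} = card ` {J \<in> indep N. J \<subseteq> f ` S}"
  proof (intro set_eqI iffI)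
    fix y assume "y \<in> card ` {I \<in> indep M. I \<subseteq> S}"
    then obtain I where I: "I \<in> indep M" "I \<subseteq> S" "y = card I" by blast
    have IM: "I \<subseteq> ground M" using I(2) S by blast
    have "f ` I \<in> indep N" using iso(2) IM I(1) by blast
    moreover have "card (f ` I) = card I" using card_image[OF inj_on_subset[OF inj IM]] .
    moreover have "f ` I \<subseteq> f ` S" using I(2) by blast
    ultimately show "y \<in> card ` {J \<in> indep N. J \<subseteq> f ` S}" using I(3) by (metis (mono_tags, lifting) image_eqI mem_Collect_eq)
  next
    fix y assume "y \<in> card ` {J \<in> indep N. J \<subseteq> f ` S}"
    then obtain J where J: "J \<in> indep N" "J \<subseteq> f ` S" "y = card J" by blast
    let ?I = "S \<inter> f -` J"
    have e: "f ` ?I = J" using J(2) by blast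
    have IM: "?I \<subseteq> ground M" using S by blast
    have "?I \<in> indep M" using iso(2) IM J(1) e by simp
    moreover have "card ?I = card J" using card_image[OF inj_on_subset[OF inj IM]] e by simp
    ultimately show "y \<in> card ` {I \<in> indep M. I \<subseteq> S}" using J(3) by (metis (mono_tags, lifting) Int_lower1 image_eqI mem_Collect_eq)
  qed
  then show ?thesis unfolding rk_def by simp
qed

lemma iso_dsum_decomp:
  assumes M: "matroid M" and A: "matroid A" and B: "matroid B" and iso: "iso M (dsum A B)"
  shows "rk M (ground M) = rk A (ground A) + rk B (ground B)"
    and "\<And>S. S \<subseteq> ground M \<Longrightarrow> \<exists>S1 S2. S1 \<subseteq> ground A \<and> S2 \<subseteq> ground B \<and>
           rk M S = rk A S1 + rk B S2 \<and> card S = card S1 + card S2"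
proof -
  interpret a: matr A by (rule matr.intro, rule A)
  interpret b: matr B by (rule matr.intro, rule B)
  obtain f where f: "bij_betw f (ground M) (ground (dsum A B))"
    "\<forall>X. X \<subseteq> ground M \<longrightarrow> (X \<in> indep M \<longleftrightarrow> f ` X \<in> indep (dsum A B))"
    using iso unfolding iso_def by blast
  have im: "f ` ground M = Inl ` ground A \<union> Inr ` ground B"
    using bij_betw_imp_surj_on[OF f(1)] unfolding ground_dsum .
  have inj: "inj_on f (ground M)" using bij_betw_imp_inj_on[OF f(1)] .
  show "rk M (ground M) = rk A (ground A) + rk B (ground B)"
    using iso_rk[OF f order_refl] im rk_dsum[OF A B] by simp
  fix S assume S: "S \<subseteq> ground M"
  let ?S1 = "Inl -` (f ` S)" and ?S2 = "Inr -` (f ` S)"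
  have sub: "f ` S \<subseteq> Inl ` ground A \<union> Inr ` ground B" using S im by blast
  have s1: "?S1 \<subseteq> ground A" using sub by auto
  have s2: "?S2 \<subseteq> ground B" using sub by auto
  have e: "f ` S = Inl ` ?S1 \<union> Inr ` ?S2" using sum_img_parts[of "f ` S"] by simp
  have "rk M S = rk A ?S1 + rk B ?S2" using iso_rk[OF f S] rk_dsum_any[OF A B, of "f ` S"] by simp
  moreover have "card S = card ?S1 + card ?S2"
  proof -
    have "card S = card (f ` S)" using card_image[OF inj_on_subset[OF inj S]] by simp
    also have "\<dots> = card ?S1 + card ?S2" using e card_sum finite_subset[OF s1 a.finE] finite_subset[OF s2 b.finE] by metis
    finally show ?thesis .
  qed
  ultimately show "\<exists>S1 S2. S1 \<subseteq> ground A \<and> S2 \<subseteq> ground B \<and>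
           rk M S = rk A S1 + rk B S2 \<and> card S = card S1 + card S2" using s1 s2 by blast
qed

context matr
begin

lemma iso_split:
  assumes Y: "Y \<subseteq> E" and g: "bij_betw g Y (ground B)"
    and cond: "\<And>X. X \<subseteq> E \<Longrightarrow> (X \<in> indep M \<longleftrightarrow> (X - Y \<in> indep M \<and> g ` (X \<inter> Y) \<in> indep B))"
  shows "iso M (dsum (delete M Y) B)"
proof -
  define f where "f = (\<lambda>x. if x \<in> Y then Inr (g x) else Inl x)"
  have img: "f ` X = Inl ` (X - Y) \<union> Inr ` (g ` (X \<inter> Y))" for X
    unfolding f_def by (auto simp: image_iff) 
  have ginj: "inj_on g Y" using bij_betw_imp_inj_on[OF g] .
  have gim: "g ` Y = ground B" using bij_betw_imp_surj_on[OF g] .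
  have "inj_on f E"
  proof (rule inj_onI)
    fix x y assume "x \<in> E" "y \<in> E" "f x = f y"
    then show "x = y" unfolding f_def using ginj
      by (cases "x \<in> Y"; cases "y \<in> Y") (auto dest: inj_onD)
  qed
  moreover have "f ` E = ground (dsum (delete M Y) B)"
    unfolding img ground_dsum ground_delete using Y gim by (simp add: Int_absorb1)
  ultimately have bij: "bij_betw f E (ground (dsum (delete M Y) B))" unfolding bij_betw_def by blast
  have key: "X \<in> indep M \<longleftrightarrow> f ` X \<in> indep (dsum (delete M Y) B)" if X: "X \<subseteq> E" for X
  proof -
    have "f ` X \<in> indep (dsum (delete M Y) B) \<longleftrightarrow> (X - Y \<in> indep (delete M Y) \<and> g ` (X \<inter> Y) \<in> indep B)"
    proof
      assume "f ` X \<in> indep (dsum (delete M Y) B)"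
      then obtain I J where IJ: "f ` X = Inl ` I \<union> Inr ` J" "I \<in> indep (delete M Y)" "J \<in> indep B"
        unfolding indep_dsum by blast
      have "I = X - Y \<and> J = g ` (X \<inter> Y)" using sum_img_eq[of I J "X - Y" "g ` (X \<inter> Y)"] IJ(1) img by simp
      then show "X - Y \<in> indep (delete M Y) \<and> g ` (X \<inter> Y) \<in> indep B" using IJ by simp
    next
      assume "X - Y \<in> indep (delete M Y) \<and> g ` (X \<inter> Y) \<in> indep B"
      then show "f ` X \<in> indep (dsum (delete M Y) B)" unfolding indep_dsum img by blast
    qed
    moreover have "X - Y \<in> indep (delete M Y) \<longleftrightarrow> X - Y \<in> indep M" unfolding indep_delete by auto
    ultimately show ?thesis using cond[OF X] by simp
  qed
  show ?thesis unfolding iso_def using bij key by blast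
qed

end



lemma ground_U: "ground (U k n) = {0..<n}" by (simp add: U_def ground_def)
lemma indep_U: "indep (U k n) = {X. X \<subseteq> {0..<n} \<and> card X \<le> k}" by (simp add: U_def indep_def)

context matr
begin

lemma rk_single: "x \<in> E \<Longrightarrow> r {x} \<le> 1"
  using rk_le_card[of "{x}"] by simp

lemma rk_E_del: assumes "e \<in> E" shows "r E \<le> r (E - {e}) + 1"
proof -
  have "E = insert e (E - {e})" using assms by blast
  then show ?thesis using rk_insert[of e "E - {e}"] by simp
qed

lemma loop_case: assumes nb: NB and e: "e \<in> E" "r {e} = 0"
  shows "\<exists>Mp :: 'a matroid. matroid Mp \<and> paving Mp \<and> iso M (dsum Mp (U 0 1))"
proof -
  let ?Mp = "delete M {e}"
  have mM: "matroid ?Mp" by (rule matroid_delete)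
  interpret D: matr ?Mp by (rule matr.intro, rule mM)
  have gD: "ground ?Mp = E - {e}" by (rule ground_delete)
  have rD: "rk ?Mp S = r (S - {e})" for S by (rule rk_delete)
  have rE: "r (E - {e}) = r E"
  proof -
    have "E = (E - {e}) \<union> {e}" using e by blast
    then have "r E \<le> r (E - {e}) + r {e}" using rk_union_le[of "E - {e}" "{e}"] by simp
    moreover have "r (E - {e}) \<le> r E" using rk_mono[of "E - {e}" E] by blast
    ultimately show ?thesis using e by linarith
  qed
  have "D.PAV" unfolding D.PAV_def gD rD
  proof (intro allI impI)
    fix S assume S: "S \<subseteq> E - {e}" "card S < r (E - {e} - {e})"
    have eq: "S - {e} = S" using S(1) by blast
    have SE: "S \<subseteq> E" using S(1) by blast
    have fS: "finite S" using finite_subset[OF SE finE] .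
    show "r (S - {e}) = card S"
    proof (rule ccontr)
      assume ne: "r (S - {e}) \<noteq> card S"
      have "r S \<le> card S" using rk_le_card[OF fS] .
      then have lt: "r S + 1 \<le> card S" using ne eq by simp
      have "r (S \<union> {e}) \<le> r S + r {e}" by (rule rk_union_le)
      then have r1: "r (S \<union> {e}) \<le> r S" using e by simp
      have "E - {e} - {e} = E - {e}" by blast
      then have "card S < r E" using S(2) rE by simp
      then have "r (S \<union> {e}) + 2 \<le> r E" using r1 lt by linarith
      moreover have "S \<union> {e} \<subseteq> E" using SE e by blast
      ultimately have "card (S \<union> {e}) \<le> r (S \<union> {e}) + 1" using nb unfolding NB_def by blast
      moreover have "e \<notin> S" using S(1) by blast
      then have "card (S \<union> {e}) = card S + 1" using fS by simp
      ultimately show False using r1 lt by linarith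
    qed
  qed
  then have pav: "paving ?Mp" using D.paving_iff by blast
  have g: "bij_betw (\<lambda>_. 0::nat) {e} (ground (U 0 1))" unfolding ground_U by (simp add: bij_betw_def)
  have "iso M (dsum ?Mp (U 0 1))"
  proof (rule iso_split)
    show "{e} \<subseteq> E" using e by blast
    show "bij_betw (\<lambda>_. 0::nat) {e} (ground (U 0 1))" by (rule g)
    fix X assume X: "X \<subseteq> E"
    show "X \<in> indep M \<longleftrightarrow> (X - {e} \<in> indep M \<and> (\<lambda>_. 0::nat) ` (X \<inter> {e}) \<in> indep (U 0 1))"
    proof
      assume Xi: "X \<in> indep M"
      have "e \<notin> X"
      proof
        assume "e \<in> X"
        then have "{e} \<in> indep M" using indep_down[OF Xi] by blast
        then have "r {e} = 1" using indep_rk by simp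
        then show False using e by simp
      qed
      then show "X - {e} \<in> indep M \<and> (\<lambda>_. 0::nat) ` (X \<inter> {e}) \<in> indep (U 0 1)"
        using Xi by (simp add: indep_U)
    next
      assume h: "X - {e} \<in> indep M \<and> (\<lambda>_. 0::nat) ` (X \<inter> {e}) \<in> indep (U 0 1)"
      have "e \<notin> X"
      proof
        assume "e \<in> X"
        then have "(\<lambda>_. 0::nat) ` (X \<inter> {e}) = {0}" by auto
        then show False using h by (simp add: indep_U)
      qed
      then show "X \<in> indep M" using h by simp
    qed
  qed
  then show ?thesis using mM pav by blast
qed

lemma coloop_case: assumes nb: NB and e: "e \<in> E" "r (E - {e}) < r E"
  shows "\<exists>Mp :: 'a matroid. matroid Mp \<and> paving Mp \<and> iso M (dsum (dual Mp) (U 1 1))"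
proof -
  let ?D = "delete M {e}"
  have mD: "matroid ?D" by (rule matroid_delete)
  interpret D: matr ?D by (rule matr.intro, rule mD)
  have gD: "ground ?D = E - {e}" by (rule ground_delete)
  have rD: "rk ?D S = r (S - {e})" for S by (rule rk_delete)
  have rE: "r (E - {e}) + 1 = r E" using rk_E_del[OF e(1)] e(2) by linarith
  have "D.DPAV" unfolding D.DPAV_def gD rD
  proof (intro allI impI)
    fix S assume S: "S \<subseteq> E - {e}" "r (E - {e} - {e}) < card S"
    have eq: "S - {e} = S" using S(1) by blast
    have ee: "E - {e} - {e} = E - {e}" by blast
    have SE: "S \<subseteq> E" using S(1) by blast
    have m: "r S \<le> r (E - {e})" using rk_mono[OF S(1)] .
    show "r (S - {e}) = r (E - {e} - {e})"
    proof (rule ccontr)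
      assume "r (S - {e}) \<noteq> r (E - {e} - {e})"
      then have "r S \<noteq> r (E - {e})" unfolding eq ee .
      then have r2: "r S + 2 \<le> r E" using m rE by linarith
      then have "card S \<le> r S + 1" using nb SE unfolding NB_def by blast
      moreover have "r (E - {e}) < card S" using S(2) unfolding ee .
      ultimately show False using r2 rE by linarith
    qed
  qed
  then have pav: "paving (dual ?D)" using D.paving_dual_iff by blast
  have mDD: "matroid (dual ?D)" by (rule D.matroid_dual)
  have dd: "dual (dual ?D) = ?D" by (rule D.dual_dual)
  have "iso M (dsum ?D (U 1 1))"
  proof (rule iso_split)
    show "{e} \<subseteq> E" using e by blast
    show "bij_betw (\<lambda>_. 0::nat) {e} (ground (U 1 1))" unfolding ground_U by (simp add: bij_betw_def)
    fix X assume X: "X \<subseteq> E"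
    have U1: "(\<lambda>_. 0::nat) ` (X \<inter> {e}) \<in> indep (U 1 1)"
    proof (cases "e \<in> X")
      case True then have "(\<lambda>_. 0::nat) ` (X \<inter> {e}) = {0}" by auto
      then show ?thesis by (simp add: indep_U)
    next
      case False then have "(\<lambda>_. 0::nat) ` (X \<inter> {e}) = {}" by auto
      then show ?thesis by (simp add: indep_U)
    qed
    show "X \<in> indep M \<longleftrightarrow> (X - {e} \<in> indep M \<and> (\<lambda>_. 0::nat) ` (X \<inter> {e}) \<in> indep (U 1 1))"
    proof
      assume "X \<in> indep M"
      then show "X - {e} \<in> indep M \<and> (\<lambda>_. 0::nat) ` (X \<inter> {e}) \<in> indep (U 1 1)"
        using indep_down U1 by blast
    next
      assume h: "X - {e} \<in> indep M \<and> (\<lambda>_. 0::nat) ` (X \<inter> {e}) \<in> indep (U 1 1)"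
      show "X \<in> indep M"
      proof (cases "e \<in> X")
        case False then show ?thesis using h by simp
      next
        case True
        have e1: "X \<union> (E - {e}) = E" using X True by blast
        have e2: "X \<inter> (E - {e}) = X - {e}" using X by blast
        have "r E + r (X - {e}) \<le> r X + r (E - {e})" using submod[of X "E - {e}"] unfolding e1 e2 .
        moreover have "r (X - {e}) = card (X - {e})" using indep_rk h by blast
        moreover have fX: "finite X" using finite_subset[OF X finE] .
        moreover have "card (X - {e}) + 1 = card X" using fX True
          by (simp add: card_Diff_singleton_if) (metis Suc_pred card_gt_0_iff empty_iff)
        ultimately have "r X \<ge> card X" using rE by linarith
        then have "r X = card X" using rk_le_card[OF fX] by linarith
        then show ?thesis using rk_indep X by blast
      qed
    qed
  qed
  then have "iso M (dsum (dual (dual ?D)) (U 1 1))" unfolding dd .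
  then show ?thesis using mDD pav by blast
qed


lemma pair_case: assumes nb: NB and Y: "Y \<subseteq> E" "card Y = 2" "r Y = 1" "r Y + r (E - Y) = r E"
    and nl: "\<forall>y\<in>Y. r {y} = 1"
  shows "\<exists>Mp :: 'a matroid. matroid Mp \<and> sparse_paving Mp \<and> iso M (dsum Mp (U 1 2))"
proof -
  let ?D = "delete M Y"
  have mD: "matroid ?D" by (rule matroid_delete)
  interpret D: matr ?D by (rule matr.intro, rule mD)
  have gD: "ground ?D = E - Y" by (rule ground_delete)
  have rD: "rk ?D S = r (S - Y)" for S by (rule rk_delete)
  have ee: "E - Y - Y = E - Y" by blast
  have rE: "r (E - Y) + 1 = r E" using Y by linarith
  have fY: "finite Y" using finite_subset[OF Y(1) finE] .
  have pav: "D.PAV" unfolding D.PAV_def gD rD ee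
  proof (intro allI impI)
    fix S assume S: "S \<subseteq> E - Y" "card S < r (E - Y)"
    have eq: "S - Y = S" using S(1) by blast
    have SE: "S \<subseteq> E" using S(1) by blast
    have fS: "finite S" using finite_subset[OF SE finE] .
    show "r (S - Y) = card S"
    proof (rule ccontr)
      assume "r (S - Y) \<noteq> card S"
      then have ne: "r S \<noteq> card S" unfolding eq .
      have "r S \<le> card S" using rk_le_card[OF fS] .
      then have lt: "r S + 1 \<le> card S" using ne by linarith
      have r1: "r (S \<union> Y) \<le> r S + 1" using rk_union_le[of S Y] Y(3) by linarith
      have "r (S \<union> Y) + 2 \<le> r E" using r1 lt S(2) rE by linarith
      moreover have "S \<union> Y \<subseteq> E" using SE Y(1) by blast
      ultimately have "card (S \<union> Y) \<le> r (S \<union> Y) + 1" using nb unfolding NB_def by blast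
      moreover have "card (S \<union> Y) = card S + card Y" using card_Un_disjoint[OF fS fY] S(1) by blast
      ultimately show False using r1 lt Y(2) by linarith
    qed
  qed
  have dpav: "D.DPAV" unfolding D.DPAV_def gD rD ee
  proof (intro allI impI)
    fix S assume S: "S \<subseteq> E - Y" "r (E - Y) < card S"
    have eq: "S - Y = S" using S(1) by blast
    have SE: "S \<subseteq> E" using S(1) by blast
    have m: "r S \<le> r (E - Y)" using rk_mono[OF S(1)] .
    show "r (S - Y) = r (E - Y)"
    proof (rule ccontr)
      assume "r (S - Y) \<noteq> r (E - Y)"
      then have "r S \<noteq> r (E - Y)" unfolding eq .
      then have r2: "r S + 2 \<le> r E" using m rE by linarith
      then have "card S \<le> r S + 1" using nb SE unfolding NB_def by blast
      then show False using r2 rE S(2) by linarith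
    qed
  qed
  have sp: "sparse_paving ?D" unfolding sparse_paving_def using pav dpav D.paving_iff D.paving_dual_iff by blast
  from Y(2)[unfolded card_2_iff] obtain y1 y2 where yy: "Y = {y1, y2}" "y1 \<noteq> y2" by blast
  define g where "g = (\<lambda>y. if y = y1 then (0::nat) else 1)"
  have "iso M (dsum ?D (U 1 2))"
  proof (rule iso_split)
    show "Y \<subseteq> E" by (rule Y(1))
    have "inj_on g Y" unfolding g_def yy inj_on_def using yy(2) by auto
    moreover have "g ` Y = {0..<2}" unfolding g_def yy two_set using yy(2) by auto
    ultimately show "bij_betw g Y (ground (U 1 2))" unfolding ground_U bij_betw_def by blast
    fix X assume X: "X \<subseteq> E"
    have gi: "inj_on g Y" unfolding g_def yy inj_on_def using yy(2) by auto
    have cg: "card (g ` (X \<inter> Y)) = card (X \<inter> Y)" using card_image[OF inj_on_subset[OF gi]] by blast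
    have gsub: "g ` (X \<inter> Y) \<subseteq> {0..<2}" unfolding g_def by auto
    have Ui: "g ` (X \<inter> Y) \<in> indep (U 1 2) \<longleftrightarrow> card (X \<inter> Y) \<le> 1"
      unfolding indep_U using gsub cg by simp
    have rXY: "r (X \<inter> Y) = min 1 (card (X \<inter> Y))"
    proof -
      have c: "X \<inter> Y = {} \<or> X \<inter> Y = {y1} \<or> X \<inter> Y = {y2} \<or> X \<inter> Y = Y" unfolding yy by blast
      have ry: "r {y1} = 1" "r {y2} = 1" using nl yy by auto
      from c show ?thesis
      proof (elim disjE)
        assume "X \<inter> Y = {}" then show ?thesis using rk_empty by simp
      next
        assume "X \<inter> Y = {y1}" then show ?thesis using ry by simp
      next
        assume "X \<inter> Y = {y2}" then show ?thesis using ry by simp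
      next
        assume "X \<inter> Y = Y" then show ?thesis using Y(2,3) by simp
      qed
    qed
    have spl: "r X = r (X \<inter> Y) + r (X - Y)" using sep_add[OF Y(1) Y(4) X] .
    have fX: "finite X" using finite_subset[OF X finE] .
    have cX: "card X = card (X - Y) + card (X \<inter> Y)" using card_split[OF fX, of Y] .
    have l1: "r (X \<inter> Y) \<le> card (X \<inter> Y)" using rk_le_card[of "X \<inter> Y"] fX by blast
    have l2: "r (X - Y) \<le> card (X - Y)" using rk_le_card[of "X - Y"] fX by blast
    have XYE: "X - Y \<subseteq> E" using X by blast
    show "X \<in> indep M \<longleftrightarrow> (X - Y \<in> indep M \<and> g ` (X \<inter> Y) \<in> indep (U 1 2))"
    proof
      assume "X \<in> indep M"
      then have "r X = card X" using indep_rk by blast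
      then have e1: "r (X \<inter> Y) = card (X \<inter> Y)" and e2: "r (X - Y) = card (X - Y)" using spl cX l1 l2 by linarith+
      have "X - Y \<in> indep M" using rk_indep[OF XYE e2] .
      moreover have "card (X \<inter> Y) \<le> 1" using e1 rXY by linarith
      ultimately show "X - Y \<in> indep M \<and> g ` (X \<inter> Y) \<in> indep (U 1 2)" using Ui by blast
    next
      assume h: "X - Y \<in> indep M \<and> g ` (X \<inter> Y) \<in> indep (U 1 2)"
      then have e2: "r (X - Y) = card (X - Y)" using indep_rk by blast
      have "card (X \<inter> Y) \<le> 1" using h Ui by blast
      then have e1: "r (X \<inter> Y) = card (X \<inter> Y)" using rXY by linarith
      have "r X = card X" using e1 e2 spl cX by linarith
      then show "X \<in> indep M" using rk_indep[OF X] by blast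
    qed
  qed
  then show ?thesis using mD sp by blast
qed

lemma NB_use: assumes nb: NB and S: "S \<subseteq> E" "r S + 2 \<le> r E" shows "card S \<le> r S + 1"
proof -
  have "\<forall>S. S \<subseteq> E \<longrightarrow> r S + 2 \<le> r E \<longrightarrow> card S \<le> r S + 1" using nb unfolding NB_def .
  then have "S \<subseteq> E \<longrightarrow> r S + 2 \<le> r E \<longrightarrow> card S \<le> r S + 1" by (rule spec)
  then show ?thesis using S by blast
qed

lemma main_fwd: assumes nb: NB and np: "\<not> PAV" and nd: "\<not> DPAV" and dc: "disconnected M"
  shows "(\<exists>e\<in>E. r {e} = 0) \<or> (\<exists>e\<in>E. r (E - {e}) < r E) \<or>
         (\<exists>Y. Y \<subseteq> E \<and> card Y = 2 \<and> r Y = 1 \<and> r Y + r (E - Y) = r E \<and> (\<forall>y\<in>Y. r {y} = 1))"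
proof (cases "\<exists>e\<in>E. r {e} = 0")
  case True then show ?thesis by (rule disjI1)
next
  case F1: False
  show ?thesis
  proof (cases "\<exists>e\<in>E. r (E - {e}) < r E")
    case True then show ?thesis by (intro disjI2 disjI1)
  next
    case F2: False
    show ?thesis
    proof (intro disjI2, rule ccontr)
  assume h3: "\<not> (\<exists>Y. Y \<subseteq> E \<and> card Y = 2 \<and> r Y = 1 \<and> r Y + r (E - Y) = r E \<and> (\<forall>y\<in>Y. r {y} = 1))"
  have nl: "\<forall>e\<in>E. r {e} = 1"
  proof
    fix e assume e: "e \<in> E"
    then have "r {e} \<noteq> 0" using F1 by auto
    then show "r {e} = 1" using rk_single[OF e] by linarith
  qed
  have nc: "\<forall>e\<in>E. r (E - {e}) = r E"
  proof
    fix e assume e: "e \<in> E"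
    then have "\<not> r (E - {e}) < r E" using F2 by auto
    moreover have "r (E - {e}) \<le> r E" using rk_mono[of "E - {e}" E] by blast
    ultimately show "r (E - {e}) = r E" by linarith
  qed
  have nopair: False if Yh: "Y \<subseteq> E" "card Y = 2" "r Y = 1" "r Y + r (E - Y) = r E" for Y
  proof -
    have yl: "\<forall>y\<in>Y. r {y} = 1" using nl Yh(1) by blast
    have "\<not> (Y \<subseteq> E \<and> card Y = 2 \<and> r Y = 1 \<and> r Y + r (E - Y) = r E \<and> (\<forall>y\<in>Y. r {y} = 1))"
      using spec[OF h3[unfolded not_ex], of Y] .
    then show False using Yh yl by simp
  qed
  obtain X where X: "X \<noteq> {}" "X \<subset> E" "r X + r (E - X) = r E"
    using dc unfolding disconnected_def by blast
  have side: "1 \<le> r Z \<and> r Z < card Z" if Z: "Z \<noteq> {}" "Z \<subseteq> E" "r Z + r (E - Z) = r E" for Z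
  proof
    obtain z where z: "z \<in> Z" using Z(1) by blast
    have zE: "z \<in> E" using z Z(2) by blast
    have "r {z} \<le> r Z" using rk_mono z by simp
    then show "1 \<le> r Z" using nl zE by simp
    have fZ: "finite Z" using finite_subset[OF Z(2) finE] .
    show "r Z < card Z"
    proof (rule ccontr)
      assume "\<not> r Z < card Z"
      then have rz: "r Z = card Z" using rk_le_card[OF fZ] by linarith
      have s: "r (E - {z}) = r ((E - {z}) \<inter> Z) + r ((E - {z}) - Z)" using sep_add[OF Z(2) Z(3)] by blast
      have e1: "(E - {z}) \<inter> Z = Z - {z}" using Z(2) z by blast
      have e2: "(E - {z}) - Z = E - Z" using z by blast
      have l: "r (Z - {z}) \<le> card (Z - {z})" using rk_le_card[of "Z - {z}"] fZ by blast
      have c: "card (Z - {z}) + 1 = card Z" using fZ z card_Diff1_less[OF fZ z] card_Diff_singleton[OF z] by linarith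
      have "r (E - {z}) < r E" using s l c rz Z(3) unfolding e1 e2 by linarith
      then show False using nc zE by simp
    qed
  qed
  have XE: "X \<subseteq> E" using X(2) by blast
  have X2: "E - X \<noteq> {}" using X(2) by blast
  have eX: "E - (E - X) = X" using XE by blast
  have X2s: "r (E - X) + r (E - (E - X)) = r E" unfolding eX using X(3) by simp
  have s1: "1 \<le> r X \<and> r X < card X" using side[OF X(1) XE X(3)] .
  have s2: "1 \<le> r (E - X) \<and> r (E - X) < card (E - X)" using side[OF X2 _ X2s] by blast
  have cE: "card E = card (E - X) + card (E \<inter> X)" using card_split[OF finE, of X] .
  have EX: "E \<inter> X = X" using XE by blast
  have X2E: "E - X \<subseteq> E" by blast
  show False
  proof (cases "r X \<ge> 2")
    case r1: True
    show False
    proof (cases "r (E - X) \<ge> 2")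
      case r2: True
      have a1: "card X \<le> r X + 1" using NB_use[OF nb XE] r2 X(3) by linarith
      have a2: "card (E - X) \<le> r (E - X) + 1" using NB_use[OF nb X2E] r1 X(3) by linarith
      have cE2: "card E = r E + 2" using a1 a2 s1 s2 cE X(3) unfolding EX by linarith
      have DPAV unfolding DPAV_def
      proof (intro allI impI)
        fix S assume S: "S \<subseteq> E" "r E < card S"
        show "r S = r E"
        proof (cases "S = E")
          case True then show ?thesis by simp
        next
          case False
          then obtain x where x: "x \<in> E" "x \<notin> S" using S(1) by blast
          then have Sx: "S \<subseteq> E - {x}" using S(1) by blast
          have fEx: "finite (E - {x})" using finE by simp
          have "card (E - {x}) = card E - 1" using card_Diff_singleton[OF x(1)] .
          then have "card (E - {x}) \<le> card S" using S(2) cE2 by linarith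
          then have "S = E - {x}" using card_seteq[OF fEx Sx] by blast
          then show ?thesis using nc x(1) by simp
        qed
      qed
      then show False using nd by blast
    next
      case r2: False
      then have r21: "r (E - X) = 1" using s2 by linarith
      have "card (E - X) \<le> r (E - X) + 1" using NB_use[OF nb X2E] r1 X(3) r21 by linarith
      then have "card (E - X) = 2" using s2 r21 by linarith
      then show False using nopair[OF X2E _ r21 X2s] by blast
    qed
  next
    case r1: False
    then have r11: "r X = 1" using s1 by linarith
    show False
    proof (cases "r (E - X) \<ge> 2")
      case r2: True
      have "card X \<le> r X + 1" using NB_use[OF nb XE] r2 X(3) r11 by linarith
      then have "card X = 2" using s1 r11 by linarith
      then show False using nopair[OF XE _ r11 X(3)] by blast
    next
      case r2: False
      then have r21: "r (E - X) = 1" using s2 by linarith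
      have PAV unfolding PAV_def
      proof (intro allI impI)
        fix S assume S: "S \<subseteq> E" "card S < r E"
        then have c2: "card S < 2" using X(3) r11 r21 by linarith
        show "r S = card S"
        proof (cases "card S = 0")
          case True
          have fS: "finite S" using finite_subset[OF S(1) finE] .
          then have "S = {}" using True by simp
          then show ?thesis using rk_empty by simp
        next
          case False
          then have "card S = 1" using c2 by linarith
          then obtain x where "S = {x}" using card_1_singletonE by blast
          then show ?thesis using nl S(1) by simp
        qed
      qed
      then show False using np by blast
    qed
  qed
qed
  qed
qed

end

lemma back_a: assumes M: "matroid M" and mp: "matroid Mp" and pv: "paving Mp"
  and iso: "iso M (dsum Mp (U 0 1))"
  shows "matr.NB M"
proof -
  interpret m: matr M by (rule matr.intro, rule M)
  interpret p: matr Mp by (rule matr.intro, rule mp)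
  have P: "p.PAV" using p.paving_iff pv by blast
  have mU: "matroid (U 0 1)" by (rule matroid_U)
  have rE: "m.r m.E = p.r p.E" using iso_dsum_decomp(1)[OF M mp mU iso] rk_U[where k=0 and n=1, OF order_refl] ground_U by simp
  show ?thesis unfolding m.NB_def
  proof (intro allI impI)
    fix S assume S: "S \<subseteq> m.E" "m.r S + 2 \<le> m.r m.E"
    obtain S1 S2 where SS: "S1 \<subseteq> p.E" "S2 \<subseteq> ground (U 0 1)" "m.r S = p.r S1 + rk (U 0 1) S2"
      "card S = card S1 + card S2" using iso_dsum_decomp(2)[OF M mp mU iso S(1)] by blast
    have S2: "S2 \<subseteq> {0..<1}" using SS(2) ground_U by simp
    have "rk (U 0 1) S2 = 0" using rk_U[OF S2] by simp
    moreover have "card S2 \<le> card {0..<1::nat}" using S2 by (intro card_mono) auto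
    ultimately have c2: "card S2 \<le> 1" "m.r S = p.r S1" using SS(3) by auto
    have "card S1 = p.r S1" using p.PAV_small[OF P SS(1)] S(2) c2 rE by linarith
    then show "card S \<le> m.r S + 1" using SS(4) c2 by linarith
  qed
qed

lemma back_b: assumes M: "matroid M" and mp: "matroid Mp" and pv: "paving Mp"
  and iso: "iso M (dsum (dual Mp) (U 1 1))"
  shows "matr.NB M"
proof -
  interpret m: matr M by (rule matr.intro, rule M)
  interpret p: matr Mp by (rule matr.intro, rule mp)
  have P: "p.PAV" using p.paving_iff pv by blast
  have mU: "matroid (U 1 1)" by (rule matroid_U)
  have md: "matroid (dual Mp)" by (rule p.matroid_dual)
  have gd: "ground (dual Mp) = p.E" by (rule p.ground_dual)
  have "rk (U 1 1) {0..<1} = 1" using rk_U[where k=1 and n=1, OF order_refl] by simp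
  then have rE: "m.r m.E = rk (dual Mp) p.E + 1" using iso_dsum_decomp(1)[OF M md mU iso] gd ground_U by simp
  have rdE: "rk (dual Mp) p.E + p.r p.E = card p.E" by (rule p.rk_dual_E)
  show ?thesis unfolding m.NB_def
  proof (intro allI impI)
    fix S assume S: "S \<subseteq> m.E" "m.r S + 2 \<le> m.r m.E"
    obtain S1 S2 where SS: "S1 \<subseteq> p.E" "S2 \<subseteq> ground (U 1 1)" "m.r S = rk (dual Mp) S1 + rk (U 1 1) S2"
      "card S = card S1 + card S2" using iso_dsum_decomp(2)[OF M md mU iso S(1)] gd by auto
    have S2: "S2 \<subseteq> {0..<1}" using SS(2) ground_U by simp
    have "card S2 \<le> card {0..<1::nat}" using S2 by (intro card_mono) auto
    then have c2: "card S2 \<le> 1" by simp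
    have "rk (U 1 1) S2 = card S2" using rk_U[OF S2] c2 by simp
    then have rS: "m.r S = rk (dual Mp) S1 + card S2" using SS(3) by simp
    have rd: "rk (dual Mp) S1 + p.r p.E = card S1 + p.r (p.E - S1)" by (rule p.rk_dual[OF SS(1)])
    have cW: "card (p.E - S1) + card S1 = card p.E"
      using card_Diff_subset[OF finite_subset[OF SS(1) p.finE] SS(1)] card_mono[OF p.finE SS(1)] by simp
    have "p.r p.E \<le> p.r (p.E - S1) + 1"
    proof (rule ccontr)
      assume "\<not> ?thesis"
      then have "p.r (p.E - S1) + 2 \<le> p.r p.E" by linarith
      then have "card (p.E - S1) = p.r (p.E - S1)" using p.PAV_small[OF P] by blast
      then show False using rd cW rdE rS S(2) rE by linarith
    qed
    then show "card S \<le> m.r S + 1" using rd rS SS(4) by linarith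
  qed
qed

lemma back_c: assumes M: "matroid M" and mp: "matroid Mp" and pv: "sparse_paving Mp"
  and iso: "iso M (dsum Mp (U 1 2))"
  shows "matr.NB M"
proof -
  interpret m: matr M by (rule matr.intro, rule M)
  interpret p: matr Mp by (rule matr.intro, rule mp)
  have P: "p.PAV" using p.paving_iff pv unfolding sparse_paving_def by blast
  have DP: "p.DPAV" using p.paving_dual_iff pv unfolding sparse_paving_def by blast
  have mU: "matroid (U 1 2)" by (rule matroid_U)
  have "rk (U 1 2) {0..<2} = 1" using rk_U[where k=1 and n=2, OF order_refl] by simp
  then have rE: "m.r m.E = p.r p.E + 1" using iso_dsum_decomp(1)[OF M mp mU iso] ground_U by simp
  show ?thesis unfolding m.NB_def
  proof (intro allI impI)
    fix S assume S: "S \<subseteq> m.E" "m.r S + 2 \<le> m.r m.E"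
    obtain S1 S2 where SS: "S1 \<subseteq> p.E" "S2 \<subseteq> ground (U 1 2)" "m.r S = p.r S1 + rk (U 1 2) S2"
      "card S = card S1 + card S2" using iso_dsum_decomp(2)[OF M mp mU iso S(1)] by blast
    have S2: "S2 \<subseteq> {0..<2}" using SS(2) ground_U by simp
    have "card S2 \<le> card {0..<2::nat}" using S2 by (intro card_mono) auto
    then have c2: "card S2 \<le> 2" by simp
    have r2: "rk (U 1 2) S2 = min 1 (card S2)" using rk_U[OF S2] .
    show "card S \<le> m.r S + 1"
    proof (cases "card S2 = 0")
      case True
      then have rS: "m.r S = p.r S1" using SS(3) r2 by simp
      have fS1: "finite S1" using finite_subset[OF SS(1) p.finE] .
      show ?thesis
      proof (cases "p.r S1 + 2 \<le> p.r p.E")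
        case True
        then have "card S1 = p.r S1" using p.PAV_small[OF P SS(1)] by blast
        then show ?thesis using SS(4) rS \<open>card S2 = 0\<close> by linarith
      next
        case False
        show ?thesis
        proof (rule ccontr)
          assume "\<not> ?thesis"
          then have "card S1 > p.r p.E" using SS(4) rS \<open>card S2 = 0\<close> False by linarith
          then have "p.r S1 = p.r p.E" using DP SS(1) unfolding p.DPAV_def by blast
          then show False using S(2) rS rE by linarith
        qed
      qed
    next
      case False
      then have rS: "m.r S = p.r S1 + 1" using SS(3) r2 by simp
      then have "p.r S1 + 2 \<le> p.r p.E" using S(2) rE by linarith
      then have "card S1 = p.r S1" using p.PAV_small[OF P SS(1)] by blast
      then show ?thesis using SS(4) rS c2 by linarith
    qed
  qed
qed

theorem proposition3p1:
  fixes M :: "'a matroid"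
  assumes "matroid M" and "disconnected M"
  shows "two_two_uniform M \<longleftrightarrow>
           (paving M \<or> paving (dual M)) \<or>
           (\<exists>Mp :: 'a matroid. matroid Mp \<and> paving Mp \<and>
               (iso M (dsum Mp (U 0 1)) \<or> iso M (dsum (dual Mp) (U 1 1)))) \<or>
           (\<exists>Mp :: 'a matroid. matroid Mp \<and> sparse_paving Mp \<and> iso M (dsum Mp (U 1 2)))"
proof -
  interpret m: matr M by (rule matr.intro, rule assms(1))
  have tt: "two_two_uniform M \<longleftrightarrow> m.NB" by (rule m.tt_iff)
  have pv: "paving M \<longleftrightarrow> m.PAV" by (rule m.paving_iff)
  have dpv: "paving (dual M) \<longleftrightarrow> m.DPAV" by (rule m.paving_dual_iff)
  show ?thesis
  proof
    assume "two_two_uniform M"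
    then have nb: m.NB using tt by blast
    show "(paving M \<or> paving (dual M)) \<or>
           (\<exists>Mp :: 'a matroid. matroid Mp \<and> paving Mp \<and>
               (iso M (dsum Mp (U 0 1)) \<or> iso M (dsum (dual Mp) (U 1 1)))) \<or>
           (\<exists>Mp :: 'a matroid. matroid Mp \<and> sparse_paving Mp \<and> iso M (dsum Mp (U 1 2)))"
    proof (cases "m.PAV \<or> m.DPAV")
      case True then show ?thesis using pv dpv by blast
    next
      case False
      then have "(\<exists>e\<in>m.E. m.r {e} = 0) \<or> (\<exists>e\<in>m.E. m.r (m.E - {e}) < m.r m.E) \<or>
         (\<exists>Y. Y \<subseteq> m.E \<and> card Y = 2 \<and> m.r Y = 1 \<and> m.r Y + m.r (m.E - Y) = m.r m.E \<and> (\<forall>y\<in>Y. m.r {y} = 1))"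
        using m.main_fwd[OF nb _ _ assms(2)] by blast
      then show ?thesis
      proof (elim disjE exE bexE conjE)
        fix e assume "e \<in> m.E" "m.r {e} = 0"
        then show ?thesis using m.loop_case[OF nb] by blast
      next
        fix e assume "e \<in> m.E" "m.r (m.E - {e}) < m.r m.E"
        then show ?thesis using m.coloop_case[OF nb] by blast
      next
        fix Y assume "Y \<subseteq> m.E" "card Y = 2" "m.r Y = 1" "m.r Y + m.r (m.E - Y) = m.r m.E" "\<forall>y\<in>Y. m.r {y} = 1"
        then show ?thesis using m.pair_case[OF nb] by blast
      qed
    qed
  next
    assume h: "(paving M \<or> paving (dual M)) \<or>
           (\<exists>Mp :: 'a matroid. matroid Mp \<and> paving Mp \<and>
               (iso M (dsum Mp (U 0 1)) \<or> iso M (dsum (dual Mp) (U 1 1)))) \<or>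
           (\<exists>Mp :: 'a matroid. matroid Mp \<and> sparse_paving Mp \<and> iso M (dsum Mp (U 1 2)))"
    have "m.NB"
      using h
    proof (elim disjE exE conjE)
      assume "paving M" then show m.NB using pv m.PAV_NB by blast
    next
      assume "paving (dual M)" then show m.NB using dpv m.DPAV_NB by blast
    next
      fix Mp :: "'a matroid" assume "matroid Mp" "paving Mp" "iso M (dsum Mp (U 0 1))"
      then show m.NB using back_a[OF assms(1)] by blast
    next
      fix Mp :: "'a matroid" assume "matroid Mp" "paving Mp" "iso M (dsum (dual Mp) (U 1 1))"
      then show m.NB using back_b[OF assms(1)] by blast
    next
      fix Mp :: "'a matroid" assume "matroid Mp" "sparse_paving Mp" "iso M (dsum Mp (U 1 2))"
      then show m.NB using back_c[OF assms(1)] by blast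
    qed
    then show "two_two_uniform M" using tt by blast
  qed
qed



end
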